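(* Let $L$ be a $3$-dimensional $\mathbb{Z}_p$-Lie lattice such that $[L,L]$ has rank $1$. Then $L$ is not self-similar of index $p$.
   Context: $p$ is any prime. A $\mathbb{Z}_p$-Lie lattice is a $\mathbb{Z}_p$-Lie algebra whose underlying module is finitely generated and free; dimension means rank. A virtual endomorphism of $L$ is a homomorphism of algebras $\varphi:M\to L$ with $M\subseteq L$ a finite-index subalgebra, of index $[L:M]$. An ideal $I$ of $L$ is $\varphi$-invariant if it lies in the domain of every power of $\varphi$ and $\varphi(I)\subseteq I$; $\varphi$ is simple if no non-zero ideal is $\varphi$-invariant. $L$ is self-similar of index $p^k$ if it has a simple virtual endomorphism of index $p^k$. *)

theory Defs
  imports Main "HOL-Computational_Algebra.Primes"
begin

section \<open>The p-adic integers Z_p as the inverse limit of Z/p^n\<close>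

definition zp :: "nat \<Rightarrow> (nat \<Rightarrow> int) set" where
  "zp p = {x. (\<forall>n. 0 \<le> x n \<and> x n < int p ^ n) \<and> (\<forall>n. x (Suc n) mod (int p ^ n) = x n)}"

definition zp_zero :: "nat \<Rightarrow> int" where
  "zp_zero = (\<lambda>n. 0)"

definition zp_add :: "nat \<Rightarrow> (nat \<Rightarrow> int) \<Rightarrow> (nat \<Rightarrow> int) \<Rightarrow> (nat \<Rightarrow> int)" where
  "zp_add p x y = (\<lambda>n. (x n + y n) mod (int p ^ n))"

definition zp_mul :: "nat \<Rightarrow> (nat \<Rightarrow> int) \<Rightarrow> (nat \<Rightarrow> int) \<Rightarrow> (nat \<Rightarrow> int)" where
  "zp_mul p x y = (\<lambda>n. (x n * y n) mod (int p ^ n))"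

type_synonym zpvec = "nat \<Rightarrow> nat \<Rightarrow> int"

definition zpvec :: "nat \<Rightarrow> nat \<Rightarrow> zpvec set" where
  "zpvec p d = {v. (\<forall>i<d. v i \<in> zp p) \<and> (\<forall>i\<ge>d. v i = zp_zero)}"

definition vzero :: zpvec where
  "vzero = (\<lambda>i. zp_zero)"

definition vadd :: "nat \<Rightarrow> zpvec \<Rightarrow> zpvec \<Rightarrow> zpvec" where
  "vadd p u v = (\<lambda>i. zp_add p (u i) (v i))"

definition vsmul :: "nat \<Rightarrow> (nat \<Rightarrow> int) \<Rightarrow> zpvec \<Rightarrow> zpvec" where
  "vsmul p c v = (\<lambda>i. zp_mul p c (v i))"

definition submod :: "nat \<Rightarrow> nat \<Rightarrow> zpvec set \<Rightarrow> bool" where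
  "submod p d N \<longleftrightarrow> N \<subseteq> zpvec p d \<and> vzero \<in> N \<and>
     (\<forall>u\<in>N. \<forall>v\<in>N. vadd p u v \<in> N) \<and> (\<forall>c\<in>zp p. \<forall>v\<in>N. vsmul p c v \<in> N)"

inductive_set zspan :: "nat \<Rightarrow> zpvec set \<Rightarrow> zpvec set" for p :: nat and S :: "zpvec set" where
  zspan_zero: "vzero \<in> zspan p S"
| zspan_step: "v \<in> S \<Longrightarrow> c \<in> zp p \<Longrightarrow> u \<in> zspan p S \<Longrightarrow> vadd p (vsmul p c v) u \<in> zspan p S"

definition lincomb :: "nat \<Rightarrow> (nat \<Rightarrow> int) list \<Rightarrow> zpvec list \<Rightarrow> zpvec" where
  "lincomb p cs ws = foldr (\<lambda>(c, w) acc. vadd p (vsmul p c w) acc) (zip cs ws) vzero"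

definition lin_indep :: "nat \<Rightarrow> zpvec list \<Rightarrow> bool" where
  "lin_indep p ws \<longleftrightarrow> (\<forall>cs. length cs = length ws \<and> set cs \<subseteq> zp p \<and> lincomb p cs ws = vzero
       \<longrightarrow> (\<forall>c\<in>set cs. c = zp_zero))"

definition free_of_rank :: "nat \<Rightarrow> zpvec set \<Rightarrow> nat \<Rightarrow> bool" where
  "free_of_rank p N r \<longleftrightarrow> (\<exists>ws. length ws = r \<and> set ws \<subseteq> N \<and> zspan p (set ws) = N \<and> lin_indep p ws)"

definition lie_lattice :: "nat \<Rightarrow> nat \<Rightarrow> (zpvec \<Rightarrow> zpvec \<Rightarrow> zpvec) \<Rightarrow> bool" where
  "lie_lattice p d br \<longleftrightarrow>
     (\<forall>x\<in>zpvec p d. \<forall>y\<in>zpvec p d. br x y \<in> zpvec p d) \<and>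
     (\<forall>x\<in>zpvec p d. \<forall>y\<in>zpvec p d. \<forall>z\<in>zpvec p d.
        br (vadd p x y) z = vadd p (br x z) (br y z) \<and> br z (vadd p x y) = vadd p (br z x) (br z y)) \<and>
     (\<forall>c\<in>zp p. \<forall>x\<in>zpvec p d. \<forall>y\<in>zpvec p d.
        br (vsmul p c x) y = vsmul p c (br x y) \<and> br x (vsmul p c y) = vsmul p c (br x y)) \<and>
     (\<forall>x\<in>zpvec p d. br x x = vzero) \<and>
     (\<forall>x\<in>zpvec p d. \<forall>y\<in>zpvec p d. \<forall>z\<in>zpvec p d.
        vadd p (vadd p (br x (br y z)) (br y (br z x))) (br z (br x y)) = vzero)"

definition derived :: "nat \<Rightarrow> nat \<Rightarrow> (zpvec \<Rightarrow> zpvec \<Rightarrow> zpvec) \<Rightarrow> zpvec set" where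
  "derived p d br = zspan p {br x y | x y. x \<in> zpvec p d \<and> y \<in> zpvec p d}"

definition subalgebra :: "nat \<Rightarrow> nat \<Rightarrow> (zpvec \<Rightarrow> zpvec \<Rightarrow> zpvec) \<Rightarrow> zpvec set \<Rightarrow> bool" where
  "subalgebra p d br M \<longleftrightarrow> submod p d M \<and> (\<forall>x\<in>M. \<forall>y\<in>M. br x y \<in> M)"

definition lie_ideal :: "nat \<Rightarrow> nat \<Rightarrow> (zpvec \<Rightarrow> zpvec \<Rightarrow> zpvec) \<Rightarrow> zpvec set \<Rightarrow> bool" where
  "lie_ideal p d br I \<longleftrightarrow> submod p d I \<and> (\<forall>x\<in>zpvec p d. \<forall>y\<in>I. br x y \<in> I)"

definition cosets :: "nat \<Rightarrow> nat \<Rightarrow> zpvec set \<Rightarrow> zpvec set set" where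
  "cosets p d M = (\<lambda>v. {vadd p v m | m. m \<in> M}) ` zpvec p d"

definition lie_hom_on :: "nat \<Rightarrow> nat \<Rightarrow> (zpvec \<Rightarrow> zpvec \<Rightarrow> zpvec) \<Rightarrow> zpvec set \<Rightarrow> (zpvec \<Rightarrow> zpvec) \<Rightarrow> bool" where
  "lie_hom_on p d br M \<phi> \<longleftrightarrow>
     (\<forall>x\<in>M. \<phi> x \<in> zpvec p d) \<and>
     (\<forall>x\<in>M. \<forall>y\<in>M. \<phi> (vadd p x y) = vadd p (\<phi> x) (\<phi> y)) \<and>
     (\<forall>c\<in>zp p. \<forall>x\<in>M. \<phi> (vsmul p c x) = vsmul p c (\<phi> x)) \<and>
     (\<forall>x\<in>M. \<forall>y\<in>M. \<phi> (br x y) = br (\<phi> x) (\<phi> y))"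

definition virtual_endo :: "nat \<Rightarrow> nat \<Rightarrow> (zpvec \<Rightarrow> zpvec \<Rightarrow> zpvec) \<Rightarrow> zpvec set \<Rightarrow> (zpvec \<Rightarrow> zpvec) \<Rightarrow> bool" where
  "virtual_endo p d br M \<phi> \<longleftrightarrow> subalgebra p d br M \<and> finite (cosets p d M) \<and> lie_hom_on p d br M \<phi>"

primrec phi_dom :: "nat \<Rightarrow> nat \<Rightarrow> zpvec set \<Rightarrow> (zpvec \<Rightarrow> zpvec) \<Rightarrow> nat \<Rightarrow> zpvec set" where
  "phi_dom p d M \<phi> 0 = zpvec p d"
| "phi_dom p d M \<phi> (Suc n) = {x \<in> M. \<phi> x \<in> phi_dom p d M \<phi> n}"

definition phi_invariant :: "nat \<Rightarrow> nat \<Rightarrow> (zpvec \<Rightarrow> zpvec \<Rightarrow> zpvec) \<Rightarrow> zpvec set \<Rightarrow> (zpvec \<Rightarrow> zpvec) \<Rightarrow> zpvec set \<Rightarrow> bool" where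
  "phi_invariant p d br M \<phi> I \<longleftrightarrow> lie_ideal p d br I \<and> (\<forall>n. I \<subseteq> phi_dom p d M \<phi> n) \<and> \<phi> ` I \<subseteq> I"

definition simple_ve :: "nat \<Rightarrow> nat \<Rightarrow> (zpvec \<Rightarrow> zpvec \<Rightarrow> zpvec) \<Rightarrow> zpvec set \<Rightarrow> (zpvec \<Rightarrow> zpvec) \<Rightarrow> bool" where
  "simple_ve p d br M \<phi> \<longleftrightarrow> (\<forall>I. phi_invariant p d br M \<phi> I \<longrightarrow> I = {vzero})"

definition self_similar_of_index :: "nat \<Rightarrow> nat \<Rightarrow> (zpvec \<Rightarrow> zpvec \<Rightarrow> zpvec) \<Rightarrow> nat \<Rightarrow> bool" where
  "self_similar_of_index p d br q \<longleftrightarrow>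
     (\<exists>M \<phi>. virtual_endo p d br M \<phi> \<and> card (cosets p d M) = q \<and> simple_ve p d br M \<phi>)"

end

theory Submission imports Defs "HOL-Number_Theory.Cong" begin

locale zpl = fixes p :: nat assumes prime_p: "prime p"
begin

lemma p_pos: "p > 0" using prime_p prime_gt_0_nat by blast
lemma q_pos: "int p ^ n > 0" using p_pos by simp

lemma zp_range: "x \<in> zp p \<Longrightarrow> 0 \<le> x n \<and> x n < int p ^ n"
  by (simp add: zp_def)

lemma zp_mod[simp]: "x \<in> zp p \<Longrightarrow> x n mod (int p ^ n) = x n"
  using zp_range[of x n] by simp

lemma zp_compat: "x \<in> zp p \<Longrightarrow> m \<le> n \<Longrightarrow> x n mod (int p ^ m) = x m"
proof (induction n)
  case 0 then show ?case using zp_range[OF 0(1), of 0] by simp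
next
  case (Suc n)
  show ?case
  proof (cases "m = Suc n")
    case True then show ?thesis using Suc.prems(1) zp_mod by metis
  next
    case False
    then have "m \<le> n" using Suc by simp
    have d: "int p ^ m dvd int p ^ n" using \<open>m \<le> n\<close> by (simp add: le_imp_power_dvd)
    have "x (Suc n) mod int p ^ n = x n" using Suc.prems by (simp add: zp_def)
    then have "x (Suc n) mod int p ^ m = x n mod int p ^ m"
      using d by (metis mod_mod_cancel)
    then show ?thesis using Suc.IH[OF Suc.prems(1) \<open>m \<le> n\<close>] by simp
  qed
qed

lemma zp_modI:
  assumes "\<And>n. [g (Suc n) = g n] (mod (int p ^ n))"
  shows "(\<lambda>n. g n mod (int p ^ n)) \<in> zp p"
proof -
  have "(g (Suc n) mod int p ^ Suc n) mod int p ^ n = g n mod int p ^ n" for n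
  proof -
    have "int p ^ n dvd int p ^ Suc n" by simp
    then have "(g (Suc n) mod int p ^ Suc n) mod int p ^ n = g (Suc n) mod int p ^ n"
      by (metis mod_mod_cancel)
    also have "\<dots> = g n mod int p ^ n" using assms[of n] by (simp add: cong_def)
    finally show ?thesis .
  qed
  then show ?thesis unfolding zp_def using q_pos by (auto simp: pos_mod_bound)
qed

lemma zp_cong_step: "x \<in> zp p \<Longrightarrow> [x (Suc n) = x n] (mod (int p ^ n))"
  by (simp add: cong_def zp_def)

lemma zp_add_mem[simp]: "x \<in> zp p \<Longrightarrow> y \<in> zp p \<Longrightarrow> zp_add p x y \<in> zp p"
  unfolding zp_add_def by (rule zp_modI) (intro cong_add zp_cong_step)

lemma zp_mul_mem[simp]: "x \<in> zp p \<Longrightarrow> y \<in> zp p \<Longrightarrow> zp_mul p x y \<in> zp p"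
  unfolding zp_mul_def by (rule zp_modI) (intro cong_mult zp_cong_step)

definition zint :: "int \<Rightarrow> nat \<Rightarrow> int" where "zint t = (\<lambda>n. t mod (int p ^ n))"
definition zneg :: "(nat \<Rightarrow> int) \<Rightarrow> nat \<Rightarrow> int" where "zneg x = (\<lambda>n. (- x n) mod (int p ^ n))"

lemma zint_mem[simp]: "zint t \<in> zp p"
  unfolding zint_def by (rule zp_modI) simp

lemma zneg_mem[simp]: "x \<in> zp p \<Longrightarrow> zneg x \<in> zp p"
  unfolding zneg_def by (rule zp_modI) (intro cong_minus_minus_iff[THEN iffD2] zp_cong_step)

lemma zp_zero_mem[simp]: "zp_zero \<in> zp p"
  unfolding zp_def zp_zero_def using q_pos by auto

lemma zp_eqI: "x \<in> zp p \<Longrightarrow> y \<in> zp p \<Longrightarrow> (\<And>n. [x n = y n] (mod (int p ^ n))) \<Longrightarrow> x = y"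
  by (rule ext) (metis cong_def zp_mod)

lemmas zdefs = zp_add_def zp_mul_def zint_def zneg_def zp_zero_def

lemma zp_cong_compat: "x \<in> zp p \<Longrightarrow> m \<le> n \<Longrightarrow> [x n = x m] (mod (int p ^ m))"
  using zp_compat by (simp add: cong_def)

lemma zp_add_zero[simp]: "x \<in> zp p \<Longrightarrow> zp_add p x zp_zero = x"
  by (rule ext) (simp add: zdefs)
lemma zp_zero_add[simp]: "x \<in> zp p \<Longrightarrow> zp_add p zp_zero x = x"
  by (rule ext) (simp add: zdefs)
lemma zp_mul_one[simp]: "x \<in> zp p \<Longrightarrow> zp_mul p x (zint 1) = x"
  by (rule ext) (simp add: zdefs mod_simps)
lemma zp_one_mul[simp]: "x \<in> zp p \<Longrightarrow> zp_mul p (zint 1) x = x"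
  by (rule ext) (simp add: zdefs mod_simps)
lemma zp_mul_zero[simp]: "zp_mul p x zp_zero = zp_zero"
  by (rule ext) (simp add: zdefs)
lemma zp_zero_mul[simp]: "zp_mul p zp_zero x = zp_zero"
  by (rule ext) (simp add: zdefs)
lemma zp_mul_comm: "zp_mul p x y = zp_mul p y x"
  by (rule ext) (simp add: zdefs mult.commute)
lemma zp_add_comm: "zp_add p x y = zp_add p y x"
  by (rule ext) (simp add: zdefs add.commute)
lemma zint_0: "zint 0 = zp_zero"
  by (rule ext) (simp add: zdefs)
lemma zint_add: "zp_add p (zint a) (zint b) = zint (a + b)"
  by (rule ext) (simp add: zdefs mod_simps)
lemma zint_mul: "zp_mul p (zint a) (zint b) = zint (a * b)"
  by (rule ext) (simp add: zdefs mod_simps)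

lemma zp_sub_eq: "x \<in> zp p \<Longrightarrow> y \<in> zp p \<Longrightarrow> zp_add p x (zneg y) = zp_zero \<Longrightarrow> x = y"
proof -
  assume x: "x \<in> zp p" and y: "y \<in> zp p" and e: "zp_add p x (zneg y) = zp_zero"
  show "x = y"
  proof (rule zp_eqI[OF x y])
    fix n
    have "(x n + (- y n) mod int p ^ n) mod int p ^ n = 0"
      using fun_cong[OF e, of n] by (simp add: zdefs)
    then have "(x n - y n) mod int p ^ n = 0" by (simp add: mod_simps)
    then show "[x n = y n] (mod int p ^ n)"
      by (simp add: cong_iff_dvd_diff mod_eq_0_iff_dvd cong_sym_eq)
  qed
qed

lemma zp_mul_sub: "zp_mul p a (zp_add p x (zneg y)) = zp_add p (zp_mul p a x) (zneg (zp_mul p a y))"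
  by (rule ext) (simp add: zdefs mod_simps algebra_simps)

lemma zp_sub_self: "x \<in> zp p \<Longrightarrow> zp_add p x (zneg x) = zp_zero"
  by (rule ext) (simp add: zdefs mod_simps)

lemma int_not_dvd_mult:
  fixes P X Y :: int
  assumes P: "prime P" and a: "\<not> P ^ a dvd X" and b: "\<not> P ^ b dvd Y"
  shows "\<not> P ^ (a + b) dvd X * Y"
proof -
  have X0: "X \<noteq> 0" using a by (metis dvd_0_right)
  have Y0: "Y \<noteq> 0" using b by (metis dvd_0_right)
  have nu: "\<not> is_unit P" using P not_prime_unit by blast
  have ma: "multiplicity P X < a" using a power_dvd_iff_le_multiplicity[OF X0 nu, of a] by (metis not_le)
  have mb: "multiplicity P Y < b" using b power_dvd_iff_le_multiplicity[OF Y0 nu, of b] by (metis not_le)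
  have XY0: "X * Y \<noteq> 0" using X0 Y0 by simp
  have "multiplicity P (X * Y) = multiplicity P X + multiplicity P Y"
    using prime_elem_multiplicity_mult_distrib[of P X Y] P X0 Y0 prime_imp_prime_elem by blast
  then have "multiplicity P (X * Y) < a + b" using ma mb by linarith
  then show ?thesis using power_dvd_iff_le_multiplicity[OF XY0 nu, of "a+b"] by linarith
qed

lemma prime_int_p: "prime (int p)" using prime_p by simp

lemma zp_nonzero_level:
  assumes x: "x \<in> zp p" and nz: "x \<noteq> zp_zero"
  obtains n0 where "\<And>N. n0 \<le> N \<Longrightarrow> \<not> int p ^ n0 dvd x N"
proof -
  from nz obtain n0 where "x n0 \<noteq> 0" unfolding zp_zero_def by auto
  then have "\<not> int p ^ n0 dvd x N" if "n0 \<le> N" for N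
  proof -
    have "x N mod int p ^ n0 = x n0" by (rule zp_compat[OF x that])
    with \<open>x n0 \<noteq> 0\<close> show ?thesis by (auto simp: dvd_eq_mod_eq_0)
  qed
  then show ?thesis using that by blast
qed

lemma zp_domain:
  assumes x: "x \<in> zp p" and y: "y \<in> zp p" and e: "zp_mul p x y = zp_zero"
  shows "x = zp_zero \<or> y = zp_zero"
proof (rule ccontr)
  assume "\<not> ?thesis"
  then have nx: "x \<noteq> zp_zero" and ny: "y \<noteq> zp_zero" by auto
  obtain n0 where h0: "\<And>N. n0 \<le> N \<Longrightarrow> \<not> int p ^ n0 dvd x N" using zp_nonzero_level[OF x nx] by blast
  obtain n1 where h1: "\<And>N. n1 \<le> N \<Longrightarrow> \<not> int p ^ n1 dvd y N" using zp_nonzero_level[OF y ny] by blast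
  let ?N = "n0 + n1"
  have "\<not> int p ^ (n0 + n1) dvd x ?N * y ?N"
    by (rule int_not_dvd_mult[OF prime_int_p h0 h1]) auto
  moreover have "(x ?N * y ?N) mod int p ^ ?N = 0" using fun_cong[OF e, of ?N] by (simp add: zdefs)
  ultimately show False by (simp add: mod_eq_0_iff_dvd)
qed

lemma zp_mul_cancel:
  assumes a: "a \<in> zp p" "a \<noteq> zp_zero" and x: "x \<in> zp p" and y: "y \<in> zp p"
    and e: "zp_mul p a x = zp_mul p a y"
  shows "x = y"
proof -
  have "zp_mul p a (zp_add p x (zneg y)) = zp_zero"
    using a y by (simp add: zp_mul_sub e zp_sub_self)
  then have "zp_add p x (zneg y) = zp_zero" using zp_domain[of a] a x y by auto
  then show ?thesis using zp_sub_eq x y by blast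
qed

lemma zint_p_nz: "zint (int p) \<noteq> zp_zero"
proof
  assume h: "zint (int p) = zp_zero"
  have "zint (int p) 2 = zp_zero 2" using h by simp
  then have "int p mod int p ^ 2 = 0" by (simp add: zdefs)
  moreover have "int p mod int p ^ 2 = int p"
  proof -
    have "int p > 1" using prime_p prime_gt_1_nat by simp
    then have "int p < int p ^ 2" by (simp add: power2_eq_square)
    then show ?thesis using \<open>int p > 1\<close> by (simp add: zmod_trivial_iff)
  qed
  ultimately show False using prime_p by (simp add: prime_gt_0_nat)
qed

lemma zint_1_nz: "zint 1 \<noteq> zp_zero"
proof
  assume h: "zint 1 = zp_zero"
  have "zint 1 1 = zp_zero 1" using h by simp
  then have "1 mod int p ^ 1 = 0" by (simp add: zdefs)
  then show False using prime_p prime_gt_1_nat by (simp add: zmod_trivial_iff)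
qed

lemma mod_pow_div: "(a::int) \<ge> 0 \<Longrightarrow> (P::int) > 0 \<Longrightarrow> (a mod (P * P ^ n)) div P = (a div P) mod P ^ n"
proof -
  assume "P > 0"
  have "a mod (P * P ^ n) = P * (a div P mod P ^ n) + a mod P" using \<open>P > 0\<close> by (simp add: zmod_zmult2_eq)
  then have "(a mod (P * P ^ n)) div P = (a div P mod P ^ n) + (a mod P) div P"
    using \<open>P > 0\<close> by simp
  also have "(a mod P) div P = 0" using \<open>P > 0\<close> by simp
  finally show ?thesis by simp
qed

lemma zp_div_p:
  assumes r: "r \<in> zp p" and r1: "r 1 = 0"
  shows "\<exists>s \<in> zp p. r = zp_mul p (zint (int p)) s"
proof -
  let ?P = "int p"
  have P0: "?P > 0" using p_pos by simp
  define s where "s n = r (Suc n) div ?P" for n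
  have dv: "?P dvd r (Suc n)" for n
  proof -
    have "r (Suc n) mod ?P ^ 1 = r 1" using zp_compat[OF r, of 1 "Suc n"] by simp
    then show ?thesis using r1 by (simp add: mod_eq_0_iff_dvd)
  qed
  have sm: "s \<in> zp p"
    unfolding zp_def mem_Collect_eq
  proof (intro conjI allI)
    fix n
    show "0 \<le> s n" unfolding s_def using zp_range[OF r] P0 by (simp add: pos_imp_zdiv_nonneg_iff)
    have lt: "r (Suc n) < ?P * ?P ^ n" using zp_range[OF r, of "Suc n"] by simp
    have eq: "r (Suc n) = ?P * s n" unfolding s_def using dv[of n] by simp
    from lt eq have "?P * s n < ?P * ?P ^ n" by simp
    then show "s n < ?P ^ n" using P0 by simp
    have "s (Suc n) mod ?P ^ n = (r (Suc (Suc n)) mod (?P * ?P ^ n)) div ?P"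
      unfolding s_def using mod_pow_div[of "r (Suc (Suc n))" ?P n] zp_range[OF r] P0 by simp
    also have "r (Suc (Suc n)) mod (?P * ?P ^ n) = r (Suc n)"
      using zp_compat[OF r, of "Suc n" "Suc (Suc n)"] by (simp only: power_Suc le_Suc_eq, simp)
    finally show "s (Suc n) mod ?P ^ n = s n" unfolding s_def by simp
  qed
  have "r = zp_mul p (zint ?P) s"
  proof (rule ext)
    fix n
    have "zp_mul p (zint ?P) s n = (?P * s n) mod ?P ^ n" by (simp add: zdefs mod_simps)
    also have "?P * s n = r (Suc n)" unfolding s_def using dv[of n] by simp
    also have "r (Suc n) mod ?P ^ n = r n" using r unfolding zp_def by simp
    finally show "r n = zp_mul p (zint ?P) s n" by simp
  qed
  then show ?thesis using sm by blast
qed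

lemma zint_unit:
  assumes nd: "\<not> int p dvd t"
  shows "\<exists>s \<in> zp p. zp_mul p (zint t) s = zint 1"
proof -
  have cop: "coprime t (int p ^ n)" for n
  proof -
    have "coprime t (int p)" using nd prime_int_p
      by (metis coprime_commute prime_imp_coprime)
    then show ?thesis by simp
  qed
  define inv where "inv n = (SOME x. [t * x = 1] (mod (int p ^ n)))" for n
  have inv: "[t * inv n = 1] (mod (int p ^ n))" for n
    unfolding inv_def using cong_solve_coprime_int[OF cop[of n]] by (rule someI_ex)
  have "[inv (Suc n) = inv n] (mod (int p ^ n))" for n
  proof -
    have "[t * inv (Suc n) = 1] (mod (int p ^ n))"
      using inv[of "Suc n"] by (rule cong_dvd_modulus) simp
    then have "[t * inv (Suc n) = t * inv n] (mod (int p ^ n))"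
      using inv[of n] by (meson cong_sym cong_trans)
    then show ?thesis using cong_mult_lcancel[OF cop[of n]] by blast
  qed
  then have sm: "(\<lambda>n. inv n mod int p ^ n) \<in> zp p" by (rule zp_modI)
  have "zp_mul p (zint t) (\<lambda>n. inv n mod int p ^ n) = zint 1"
  proof (rule ext)
    fix n
    have "zp_mul p (zint t) (\<lambda>n. inv n mod int p ^ n) n = (t * inv n) mod int p ^ n"
      by (simp add: zdefs mod_simps)
    also have "\<dots> = 1 mod int p ^ n" using inv[of n] by (simp add: cong_def)
    finally show "zp_mul p (zint t) (\<lambda>n. inv n mod int p ^ n) n = zint 1 n" by (simp add: zint_def)
  qed
  then show ?thesis using sm by blast
qed



lemmas vdefs = vadd_def vsmul_def vzero_def

definition vneg :: "zpvec \<Rightarrow> zpvec" where "vneg v = vsmul p (zint (-1)) v"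

lemma zpvec_hi: "v \<in> zpvec p d \<Longrightarrow> d \<le> i \<Longrightarrow> v i = zp_zero"
  by (simp add: zpvec_def)
lemma zpvec_coord: "v \<in> zpvec p d \<Longrightarrow> i < d \<Longrightarrow> v i \<in> zp p"
  by (simp add: zpvec_def)
lemma zpvec_mod[simp]: "v \<in> zpvec p d \<Longrightarrow> v i n mod (int p ^ n) = v i n"
proof (cases "i < d")
  case True
  assume "v \<in> zpvec p d" then show ?thesis using True zpvec_coord by simp
next
  case False
  assume "v \<in> zpvec p d" then show ?thesis using False zpvec_hi[of v d i] by (simp add: zp_zero_def)
qed

lemma vzero_mem[simp]: "vzero \<in> zpvec p d"
  by (simp add: zpvec_def vzero_def)
lemma vadd_mem[simp]: "u \<in> zpvec p d \<Longrightarrow> v \<in> zpvec p d \<Longrightarrow> vadd p u v \<in> zpvec p d"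
  unfolding zpvec_def vadd_def by auto
lemma vsmul_mem[simp]: "a \<in> zp p \<Longrightarrow> v \<in> zpvec p d \<Longrightarrow> vsmul p a v \<in> zpvec p d"
  unfolding zpvec_def vsmul_def by auto
lemma vneg_mem[simp]: "v \<in> zpvec p d \<Longrightarrow> vneg v \<in> zpvec p d"
  unfolding vneg_def by simp
lemma vneg_alt: "vneg v = (\<lambda>i n. (- v i n) mod (int p ^ n))"
  unfolding vneg_def by (intro ext) (simp add: vdefs zdefs mod_simps)

lemma vec_eqI: "u \<in> zpvec p d \<Longrightarrow> v \<in> zpvec p d \<Longrightarrow> (\<And>i. i < d \<Longrightarrow> u i = v i) \<Longrightarrow> u = v"
  by (rule ext) (metis not_le zpvec_hi)

lemma vadd_zero[simp]: "u \<in> zpvec p d \<Longrightarrow> vadd p u vzero = u"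
  by (intro ext) (simp add: vdefs zdefs)
lemma zero_vadd[simp]: "u \<in> zpvec p d \<Longrightarrow> vadd p vzero u = u"
  by (intro ext) (simp add: vdefs zdefs)
lemma vadd_comm: "vadd p u v = vadd p v u"
  by (intro ext) (simp add: vdefs zdefs add.commute)
lemma vadd_assoc: "u \<in> zpvec p d \<Longrightarrow> v \<in> zpvec p d \<Longrightarrow> w \<in> zpvec p d \<Longrightarrow>
   vadd p (vadd p u v) w = vadd p u (vadd p v w)"
  by (intro ext) (simp add: vdefs zdefs mod_simps add.assoc)
lemma vsmul_vadd: "vsmul p a (vadd p u v) = vadd p (vsmul p a u) (vsmul p a v)"
  by (intro ext) (simp add: vdefs zdefs mod_simps algebra_simps)
lemma vadd_vsmul: "vsmul p (zp_add p a b) u = vadd p (vsmul p a u) (vsmul p b u)"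
  by (intro ext) (simp add: vdefs zdefs mod_simps algebra_simps)
lemma vsmul_vsmul: "vsmul p a (vsmul p b u) = vsmul p (zp_mul p a b) u"
  by (intro ext) (simp add: vdefs zdefs mod_simps algebra_simps)
lemma vsmul_one[simp]: "u \<in> zpvec p d \<Longrightarrow> vsmul p (zint 1) u = u"
  by (intro ext) (simp add: vdefs zdefs mod_simps)
lemma vsmul_zero[simp]: "vsmul p zp_zero u = vzero"
  by (intro ext) (simp add: vdefs zdefs)
lemma vsmul_vzero[simp]: "vsmul p a vzero = vzero"
  by (intro ext) (simp add: vdefs zdefs)
lemma vsmul_zint0[simp]: "vsmul p (zint 0) u = vzero"
  by (intro ext) (simp add: vdefs zdefs)

lemma vsub_eq: "a \<in> zpvec p d \<Longrightarrow> b \<in> zpvec p d \<Longrightarrow> vadd p a b = c \<Longrightarrow> b = vadd p c (vneg a)"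
  unfolding vneg_alt by (intro ext) (auto simp: vdefs zdefs mod_simps)

lemma vsub_zero: "a \<in> zpvec p d \<Longrightarrow> b \<in> zpvec p d \<Longrightarrow> vadd p a b = vzero \<Longrightarrow> b = vneg a"
proof -
  assume a: "a \<in> zpvec p d" and b: "b \<in> zpvec p d" and e: "vadd p a b = vzero"
  have "b = vadd p vzero (vneg a)" by (rule vsub_eq[OF a b e])
  then show "b = vneg a" using vneg_mem[OF a] by simp
qed

lemma vint_sub: "vadd p (vsmul p (zint i) x) (vneg (vsmul p (zint j) x)) = vsmul p (zint (i - j)) x"
  unfolding vneg_alt by (intro ext) (simp add: vdefs zdefs mod_simps algebra_simps)

lemma vec_nonzero_coord:
  assumes "v \<in> zpvec p d" "v \<noteq> vzero"
  obtains i where "i < d" "v i \<noteq> zp_zero"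
proof -
  have "\<exists>i<d. v i \<noteq> zp_zero"
  proof (rule ccontr)
    assume "\<not> ?thesis"
    then have "v = vzero" using assms(1) by (intro vec_eqI[OF assms(1) vzero_mem]) (auto simp: vzero_def)
    then show False using assms(2) by simp
  qed
  then show ?thesis using that by blast
qed

lemma vsmul_eq_zero:
  assumes a: "a \<in> zp p" and v: "v \<in> zpvec p d" and e: "vsmul p a v = vzero"
  shows "a = zp_zero \<or> v = vzero"
proof (rule ccontr)
  assume "\<not> ?thesis"
  then have a0: "a \<noteq> zp_zero" and v0: "v \<noteq> vzero" by auto
  obtain i where i: "i < d" "v i \<noteq> zp_zero" using vec_nonzero_coord[OF v v0] by blast
  have "zp_mul p a (v i) = zp_zero" using fun_cong[OF e, of i] by (simp add: vsmul_def vzero_def)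
  then show False using zp_domain[OF a zpvec_coord[OF v i(1)]] a0 i(2) by blast
qed

lemma vsmul_cancel_vec:
  assumes v: "v \<in> zpvec p d" "v \<noteq> vzero" and a: "a \<in> zp p" and b: "b \<in> zp p"
    and e: "vsmul p a v = vsmul p b v"
  shows "a = b"
proof -
  obtain i where i: "i < d" "v i \<noteq> zp_zero" using vec_nonzero_coord[OF v] by blast
  have "zp_mul p a (v i) = zp_mul p b (v i)" using fun_cong[OF e, of i] by (simp add: vsmul_def)
  then have "zp_mul p (v i) a = zp_mul p (v i) b" by (simp add: zp_mul_comm)
  then show ?thesis using zp_mul_cancel[OF zpvec_coord[OF v(1) i(1)] i(2) a b] by blast
qed

lemma vsmul_cancel_scalar:
  assumes a: "a \<in> zp p" "a \<noteq> zp_zero" and u: "u \<in> zpvec p d" and v: "v \<in> zpvec p d"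
    and e: "vsmul p a u = vsmul p a v"
  shows "u = v"
proof (rule vec_eqI[OF u v])
  fix i assume i: "i < d"
  have "zp_mul p a (u i) = zp_mul p a (v i)" using fun_cong[OF e, of i] by (simp add: vsmul_def)
  then show "u i = v i" using zp_mul_cancel[OF a zpvec_coord[OF u i] zpvec_coord[OF v i]] by blast
qed


lemma zspan_sub: assumes S: "S \<subseteq> zpvec p d" shows "zspan p S \<subseteq> zpvec p d"
proof
  fix x assume "x \<in> zspan p S"
  then show "x \<in> zpvec p d" by (induction rule: zspan.induct) (use S in auto)
qed

lemma zspan_base: "v \<in> S \<Longrightarrow> v \<in> zpvec p d \<Longrightarrow> v \<in> zspan p S"
  using zspan_step[where v=v and c="zint 1" and u=vzero and S=S and p=p] zspan_zero[of p S] by simp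

lemma zspan_add:
  assumes S: "S \<subseteq> zpvec p d" and u: "u \<in> zspan p S" and v: "v \<in> zspan p S"
  shows "vadd p u v \<in> zspan p S"
  using u
proof (induction rule: zspan.induct)
  case zspan_zero
  have "v \<in> zpvec p d" using v zspan_sub[OF S] by blast
  then show ?case using v by simp
next
  case (zspan_step x c u)
  have m: "x \<in> zpvec p d" "u \<in> zpvec p d" "v \<in> zpvec p d"
    using zspan_step S zspan_sub[OF S] v by auto
  have "vadd p (vadd p (vsmul p c x) u) v = vadd p (vsmul p c x) (vadd p u v)"
    using m zspan_step(2) by (simp add: vadd_assoc[of _ d])
  then show ?case using zspan.zspan_step[OF zspan_step(1,2,4)] by simp
qed

lemma zspan_smul:
  assumes a: "a \<in> zp p" and u: "u \<in> zspan p S"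
  shows "vsmul p a u \<in> zspan p S"
  using u
proof (induction rule: zspan.induct)
  case zspan_zero then show ?case by (simp add: zspan.zspan_zero)
next
  case (zspan_step x c u)
  have "vsmul p a (vadd p (vsmul p c x) u) = vadd p (vsmul p (zp_mul p a c) x) (vsmul p a u)"
    by (simp add: vsmul_vadd vsmul_vsmul)
  then show ?case using zspan.zspan_step[OF zspan_step(1) _ zspan_step(4)] a zspan_step(2) by simp
qed

lemma zspan_least:
  assumes "vzero \<in> N" "\<And>u v. u \<in> N \<Longrightarrow> v \<in> N \<Longrightarrow> vadd p u v \<in> N"
    "\<And>c v. c \<in> zp p \<Longrightarrow> v \<in> N \<Longrightarrow> vsmul p c v \<in> N" "S \<subseteq> N"
  shows "zspan p S \<subseteq> N"
proof
  fix x assume "x \<in> zspan p S"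
  then show "x \<in> N"
  proof (induction rule: zspan.induct)
    case zspan_zero show ?case by (rule assms(1))
  next
    case (zspan_step v c u)
    have "v \<in> N" using zspan_step(1) assms(4) by blast
    then show ?case using assms(2)[OF assms(3)[OF zspan_step(2)] zspan_step(4)] by blast
  qed
qed

lemma zspan_single:
  assumes w: "w \<in> zpvec p d" and x: "x \<in> zspan p {w}"
  shows "\<exists>r \<in> zp p. x = vsmul p r w"
  using x
proof (induction rule: zspan.induct)
  case zspan_zero
  have "vzero = vsmul p zp_zero w" by (rule vsmul_zero[symmetric])
  then show ?case by (rule bexI[OF _ zp_zero_mem])
next
  case (zspan_step v c u)
  from zspan_step.IH obtain r where r: "r \<in> zp p" "u = vsmul p r w" by (elim bexE)
  have vw: "v = w" using zspan_step(1) by simp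
  have e: "vadd p (vsmul p c v) u = vsmul p (zp_add p c r) w"
    unfolding vadd_vsmul vw r(2) ..
  have m: "zp_add p c r \<in> zp p" using zspan_step(2) r(1) by simp
  show ?case by (rule bexI[where x="zp_add p c r"]) (rule e, rule m)
qed

definition primitive :: "nat \<Rightarrow> zpvec \<Rightarrow> bool" where
  "primitive d c \<longleftrightarrow> c \<in> zpvec p d \<and> \<not> (\<exists>v \<in> zpvec p d. c = vsmul p (zint (int p)) v)"

lemma prim_decomp:
  assumes w: "w \<in> zpvec p d" and w0: "w \<noteq> vzero"
  shows "\<exists>k c. primitive d c \<and> w = vsmul p (zint (int p ^ k)) c"
proof -
  define A where "A = {k. \<exists>c \<in> zpvec p d. w = vsmul p (zint (int p ^ k)) c}"
  obtain i where i: "i < d" "w i \<noteq> zp_zero" using vec_nonzero_coord[OF w w0] by blast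
  then obtain n0 where n0: "w i n0 \<noteq> 0" unfolding zp_zero_def by auto
  have bound: "k < n0" if "k \<in> A" for k
  proof (rule ccontr)
    assume "\<not> k < n0"
    then have dv: "int p ^ n0 dvd int p ^ k" by (simp add: le_imp_power_dvd)
    from that obtain c where c: "c \<in> zpvec p d" "w = vsmul p (zint (int p ^ k)) c" unfolding A_def by blast
    have "w i n0 = ((int p ^ k mod int p ^ n0) * c i n0) mod int p ^ n0"
      using c(2) by (simp add: vsmul_def zdefs)
    also have "\<dots> = 0" using dv by simp
    finally show False using n0 by simp
  qed
  have finA: "finite A" using bound by (meson finite_lessThan finite_subset lessThan_iff subsetI)
  have "0 \<in> A" unfolding A_def using w by (intro CollectI bexI[of _ w]) auto
  define k where "k = Max A"
  have kA: "k \<in> A" unfolding k_def using finA \<open>0 \<in> A\<close> by (intro Max_in) auto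
  then obtain c where c: "c \<in> zpvec p d" "w = vsmul p (zint (int p ^ k)) c" unfolding A_def by blast
  have "primitive d c"
    unfolding primitive_def
  proof (intro conjI c(1) notI)
    assume "\<exists>v \<in> zpvec p d. c = vsmul p (zint (int p)) v"
    then obtain v where v: "v \<in> zpvec p d" "c = vsmul p (zint (int p)) v" by blast
    have "w = vsmul p (zint (int p ^ Suc k)) v" using c(2) v(2)
      by (simp add: vsmul_vsmul zint_mul mult.commute)
    then have "Suc k \<in> A" unfolding A_def using v(1) by blast
    then have "Suc k \<le> k" unfolding k_def using finA by simp
    then show False by simp
  qed
  then show ?thesis using c(2) by blast
qed

lemma prim_sat1:
  assumes c: "primitive d c" and v: "v \<in> zpvec p d" and r: "r \<in> zp p"
    and e: "vsmul p (zint (int p)) v = vsmul p r c"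
  shows "\<exists>s \<in> zp p. v = vsmul p s c"
proof (cases "r 1 = 0")
  case True
  obtain s where s: "s \<in> zp p" "r = zp_mul p (zint (int p)) s" using zp_div_p[OF r True] by blast
  have cm: "c \<in> zpvec p d" using c unfolding primitive_def by simp
  have "vsmul p (zint (int p)) v = vsmul p (zint (int p)) (vsmul p s c)"
    using e s by (simp add: vsmul_vsmul)
  then have "v = vsmul p s c"
    using vsmul_cancel_scalar[OF zint_mem zint_p_nz v] cm s(1) by simp
  then show ?thesis using s(1) by blast
next
  case False
  have cm: "c \<in> zpvec p d" using c unfolding primitive_def by simp
  have ci: "c i 1 = 0" if i: "i < d" for i
  proof -
    have ci_zp: "c i \<in> zp p" using zpvec_coord[OF cm i] .
    have "vsmul p (zint (int p)) v i 1 = vsmul p r c i 1" using e by simp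
    then have "(int p mod int p * v i 1) mod int p = (r 1 * c i 1) mod int p"
      by (simp add: vsmul_def zdefs)
    then have dvd: "int p dvd r 1 * c i 1" by (simp add: mod_eq_0_iff_dvd)
    have r1: "0 \<le> r 1" "r 1 < int p" using zp_range[OF r, of 1] by auto
    have "\<not> int p dvd r 1"
    proof
      assume "int p dvd r 1"
      then have "int p \<le> r 1" using False r1 by (intro zdvd_imp_le) auto
      then show False using r1 by simp
    qed
    then have "int p dvd c i 1" using dvd prime_int_p by (meson prime_dvd_mult_iff)
    moreover have "0 \<le> c i 1" "c i 1 < int p" using zp_range[OF ci_zp, of 1] by auto
    ultimately show ?thesis
    proof -
      assume d: "int p dvd c i 1" and b: "0 \<le> c i 1" "c i 1 < int p"
      show ?thesis
      proof (rule ccontr)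
        assume "c i 1 \<noteq> 0"
        then have "int p \<le> c i 1" using d b by (intro zdvd_imp_le) auto
        then show False using b by simp
      qed
    qed
  qed
  define v' where "v' = (\<lambda>i. if i < d then (SOME s. s \<in> zp p \<and> c i = zp_mul p (zint (int p)) s) else zp_zero)"
  have v'i: "v' i \<in> zp p \<and> c i = zp_mul p (zint (int p)) (v' i)" if "i < d" for i
  proof -
    have "\<exists>s. s \<in> zp p \<and> c i = zp_mul p (zint (int p)) s"
      using zp_div_p[OF zpvec_coord[OF cm that] ci[OF that]] by blast
    then have "(SOME s. s \<in> zp p \<and> c i = zp_mul p (zint (int p)) s) \<in> zp p \<and>
       c i = zp_mul p (zint (int p)) (SOME s. s \<in> zp p \<and> c i = zp_mul p (zint (int p)) s)"
      by (rule someI_ex)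
    then show ?thesis unfolding v'_def using that by simp
  qed
  have v'm: "v' \<in> zpvec p d" unfolding zpvec_def using v'i by (auto simp: v'_def)
  have "c = vsmul p (zint (int p)) v'"
    by (rule vec_eqI[OF cm vsmul_mem[OF zint_mem v'm]]) (simp add: vsmul_def v'i)
  then show ?thesis using c v'm unfolding primitive_def by blast
qed

lemma prim_sat:
  assumes c: "primitive d c"
  shows "v \<in> zpvec p d \<Longrightarrow> r \<in> zp p \<Longrightarrow> vsmul p (zint (int p ^ j)) v = vsmul p r c \<Longrightarrow> \<exists>s \<in> zp p. v = vsmul p s c"
proof (induction j arbitrary: v r)
  case 0 then show ?case by auto
next
  case (Suc j)
  have "vsmul p (zint (int p ^ j)) (vsmul p (zint (int p)) v) = vsmul p r c"
    using Suc.prems by (simp add: vsmul_vsmul zint_mul mult.commute)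
  then obtain s where s: "s \<in> zp p" "vsmul p (zint (int p)) v = vsmul p s c"
    using Suc.IH[of "vsmul p (zint (int p)) v" r] Suc.prems by auto
  then show ?case using prim_sat1[OF c Suc.prems(1) s(1)] by blast
qed


lemma zint_pow_nz: "zint (int p ^ j) \<noteq> zp_zero"
proof
  assume h: "zint (int p ^ j) = zp_zero"
  have "zint (int p ^ j) (Suc j) = zp_zero (Suc j)" using h by simp
  then have "int p ^ j mod int p ^ Suc j = 0" by (simp add: zdefs)
  moreover have "int p ^ j < int p ^ Suc j"
  proof -
    have g: "1 < int p" using prime_p prime_gt_1_nat by simp
    have "0 < int p ^ j" using p_pos by simp
    then have "1 * int p ^ j < int p * int p ^ j" using g by (intro mult_strict_right_mono) auto
    then show ?thesis by simp
  qed
  moreover have "0 < int p ^ j" using p_pos by simp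
  ultimately show False by (simp add: zmod_trivial_iff)
qed

lemma zneg_zneg: "x \<in> zp p \<Longrightarrow> zneg (zneg x) = x"
  by (rule ext) (simp add: zdefs mod_simps)

lemma zneg_nz: "x \<in> zp p \<Longrightarrow> x \<noteq> zp_zero \<Longrightarrow> zneg x \<noteq> zp_zero"
proof
  assume x: "x \<in> zp p" and nz: "x \<noteq> zp_zero" and h: "zneg x = zp_zero"
  have "zneg zp_zero = zp_zero" by (rule ext) (simp add: zdefs)
  then have "x = zp_zero" using zneg_zneg[OF x] h by simp
  then show False using nz by simp
qed

end

locale setting = zpl +
  fixes br :: "zpvec \<Rightarrow> zpvec \<Rightarrow> zpvec" and M :: "zpvec set" and \<phi> :: "zpvec \<Rightarrow> zpvec"
  assumes lie: "lie_lattice p 3 br" and ve: "virtual_endo p 3 br M \<phi>" and idx: "card (cosets p 3 M) = p"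
begin

abbreviation "L \<equiv> zpvec p 3"

lemma vadd_zero_L[simp]: "u \<in> L \<Longrightarrow> vadd p u vzero = u" by (rule vadd_zero)
lemma zero_vadd_L[simp]: "u \<in> L \<Longrightarrow> vadd p vzero u = u" by (rule zero_vadd)
lemma vsmul_one_L[simp]: "u \<in> L \<Longrightarrow> vsmul p (zint 1) u = u" by (rule vsmul_one)

lemma br_mem[simp]: "x \<in> L \<Longrightarrow> y \<in> L \<Longrightarrow> br x y \<in> L"
  using lie unfolding lie_lattice_def by blast
lemma br_add_l: "x \<in> L \<Longrightarrow> y \<in> L \<Longrightarrow> z \<in> L \<Longrightarrow> br (vadd p x y) z = vadd p (br x z) (br y z)"
  using lie unfolding lie_lattice_def by blast
lemma br_add_r: "x \<in> L \<Longrightarrow> y \<in> L \<Longrightarrow> z \<in> L \<Longrightarrow> br z (vadd p x y) = vadd p (br z x) (br z y)"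
  using lie unfolding lie_lattice_def by blast
lemma br_smul_l: "c \<in> zp p \<Longrightarrow> x \<in> L \<Longrightarrow> y \<in> L \<Longrightarrow> br (vsmul p c x) y = vsmul p c (br x y)"
  using lie unfolding lie_lattice_def by blast
lemma br_smul_r: "c \<in> zp p \<Longrightarrow> x \<in> L \<Longrightarrow> y \<in> L \<Longrightarrow> br x (vsmul p c y) = vsmul p c (br x y)"
  using lie unfolding lie_lattice_def by blast
lemma br_self: "x \<in> L \<Longrightarrow> br x x = vzero"
  using lie unfolding lie_lattice_def by blast
lemma jacobi: "x \<in> L \<Longrightarrow> y \<in> L \<Longrightarrow> z \<in> L \<Longrightarrow>
   vadd p (vadd p (br x (br y z)) (br y (br z x))) (br z (br x y)) = vzero"
  using lie unfolding lie_lattice_def by blast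

lemma br_zero_l[simp]: "y \<in> L \<Longrightarrow> br vzero y = vzero"
  using br_smul_l[of zp_zero vzero y] by simp
lemma br_zero_r[simp]: "x \<in> L \<Longrightarrow> br x vzero = vzero"
  using br_smul_r[of zp_zero x vzero] by simp

lemma br_anti: "x \<in> L \<Longrightarrow> y \<in> L \<Longrightarrow> br y x = vneg (br x y)"
proof -
  assume x: "x \<in> L" and y: "y \<in> L"
  have "vzero = br (vadd p x y) (vadd p x y)" using br_self x y by simp
  also have "\<dots> = vadd p (vadd p (br x x) (br y x)) (vadd p (br x y) (br y y))"
    using x y by (simp add: br_add_l br_add_r)
  also have "\<dots> = vadd p (br y x) (br x y)" using x y by (simp add: br_self)
  also have "\<dots> = vadd p (br x y) (br y x)" by (rule vadd_comm)
  finally show ?thesis using vsub_zero[of "br x y" 3 "br y x"] x y by simp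
qed

lemma M_sub: "M \<subseteq> L" using ve unfolding virtual_endo_def subalgebra_def submod_def by blast
lemma M_mem: "x \<in> M \<Longrightarrow> x \<in> L" using M_sub by blast
lemma M_zero: "vzero \<in> M" using ve unfolding virtual_endo_def subalgebra_def submod_def by blast
lemma M_add: "x \<in> M \<Longrightarrow> y \<in> M \<Longrightarrow> vadd p x y \<in> M"
  using ve unfolding virtual_endo_def subalgebra_def submod_def by blast
lemma M_smul: "c \<in> zp p \<Longrightarrow> x \<in> M \<Longrightarrow> vsmul p c x \<in> M"
  using ve unfolding virtual_endo_def subalgebra_def submod_def by blast
lemma M_br: "x \<in> M \<Longrightarrow> y \<in> M \<Longrightarrow> br x y \<in> M"
  using ve unfolding virtual_endo_def subalgebra_def by blast
lemma M_fin: "finite (cosets p 3 M)" using ve unfolding virtual_endo_def by blast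
lemma phi_mem: "x \<in> M \<Longrightarrow> \<phi> x \<in> L" using ve unfolding virtual_endo_def lie_hom_on_def by blast
lemma phi_add: "x \<in> M \<Longrightarrow> y \<in> M \<Longrightarrow> \<phi> (vadd p x y) = vadd p (\<phi> x) (\<phi> y)"
  using ve unfolding virtual_endo_def lie_hom_on_def by blast
lemma phi_smul: "c \<in> zp p \<Longrightarrow> x \<in> M \<Longrightarrow> \<phi> (vsmul p c x) = vsmul p c (\<phi> x)"
  using ve unfolding virtual_endo_def lie_hom_on_def by blast
lemma phi_br: "x \<in> M \<Longrightarrow> y \<in> M \<Longrightarrow> \<phi> (br x y) = br (\<phi> x) (\<phi> y)"
  using ve unfolding virtual_endo_def lie_hom_on_def by blast
lemma phi_zero: "\<phi> vzero = vzero"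
  using phi_smul[OF zp_zero_mem M_zero] by simp

definition coset :: "zpvec \<Rightarrow> zpvec set" where "coset v = {vadd p v m | m. m \<in> M}"

lemma cosets_eq: "cosets p 3 M = coset ` L"
  unfolding cosets_def coset_def by simp

lemma coset_eqD: "u \<in> L \<Longrightarrow> coset u = coset v \<Longrightarrow> \<exists>m \<in> M. u = vadd p v m"
proof -
  assume u: "u \<in> L" and e: "coset u = coset v"
  have "u \<in> coset u" unfolding coset_def using M_zero u by (intro CollectI exI[of _ vzero]) simp
  then show ?thesis using e unfolding coset_def by blast
qed

lemma unit_in_M: "x \<in> L \<Longrightarrow> \<not> int p dvd t \<Longrightarrow> vsmul p (zint t) x \<in> M \<Longrightarrow> x \<in> M"
proof -
  assume x: "x \<in> L" and t: "\<not> int p dvd t" and m: "vsmul p (zint t) x \<in> M"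
  obtain s where s: "s \<in> zp p" "zp_mul p (zint t) s = zint 1" using zint_unit[OF t] by blast
  have "vsmul p s (vsmul p (zint t) x) = x" using s x by (simp add: vsmul_vsmul zp_mul_comm)
  then show ?thesis using M_smul[OF s(1) m] by simp
qed

lemma cosets_distinct:
  assumes x: "x \<in> L" "x \<notin> M" and ij: "i < j" "j < p"
  shows "coset (vsmul p (zint (int i)) x) \<noteq> coset (vsmul p (zint (int j)) x)"
proof
  assume e: "coset (vsmul p (zint (int i)) x) = coset (vsmul p (zint (int j)) x)"
  obtain m where m: "m \<in> M" "vsmul p (zint (int j)) x = vadd p (vsmul p (zint (int i)) x) m"
    using coset_eqD[OF _ e[symmetric]] x by auto
  have "m = vadd p (vsmul p (zint (int j)) x) (vneg (vsmul p (zint (int i)) x))"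
    using vsub_eq[OF _ M_mem[OF m(1)] m(2)[symmetric]] x by simp
  also have "\<dots> = vsmul p (zint (int j - int i)) x" by (rule vint_sub)
  finally have "vsmul p (zint (int j - int i)) x \<in> M" using m(1) by simp
  moreover have "\<not> int p dvd (int j - int i)"
  proof
    assume "int p dvd (int j - int i)"
    then have "int p \<le> int j - int i" using ij by (intro zdvd_imp_le) auto
    then show False using ij by simp
  qed
  ultimately show False using unit_in_M x by blast
qed

lemma all_cosets:
  assumes x: "x \<in> L" "x \<notin> M" and v: "v \<in> L"
  shows "\<exists>j < p. \<exists>m \<in> M. v = vadd p (vsmul p (zint (int j)) x) m"
proof -
  let ?f = "\<lambda>j. coset (vsmul p (zint (int j)) x)"
  have inj: "inj_on ?f {..<p}"
  proof (rule inj_onI)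
    fix i j assume ij: "i \<in> {..<p}" "j \<in> {..<p}" "?f i = ?f j"
    show "i = j"
    proof (rule ccontr)
      assume "i \<noteq> j"
      then have "i < j \<or> j < i" by arith
      then show False
      proof
        assume "i < j" then show False using cosets_distinct[OF x, of i j] ij by simp
      next
        assume "j < i" then show False using cosets_distinct[OF x, of j i] ij by simp
      qed
    qed
  qed
  have sub: "?f ` {..<p} \<subseteq> cosets p 3 M" unfolding cosets_eq using x by auto
  have "card (?f ` {..<p}) = p" using card_image[OF inj] by simp
  then have eq: "?f ` {..<p} = cosets p 3 M" using card_subset_eq[OF M_fin sub] idx by simp
  have "coset v \<in> cosets p 3 M" unfolding cosets_eq using v by simp
  then have "coset v \<in> ?f ` {..<p}" using eq by simp
  then obtain j where j0: "j \<in> {..<p}" "coset v = ?f j" by (elim imageE)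
  then have j: "j < p" "coset v = ?f j" by auto
  then show ?thesis using coset_eqD[OF v j(2)] by blast
qed

lemma pL_sub_M: assumes v: "v \<in> L" shows "vsmul p (zint (int p)) v \<in> M"
proof (cases "v \<in> M")
  case True then show ?thesis by (simp add: M_smul)
next
  case False
  obtain j m where jm: "j < p" "m \<in> M" "vsmul p (zint (int p)) v = vadd p (vsmul p (zint (int j)) v) m"
    using all_cosets[OF v False vsmul_mem[OF zint_mem v]] by blast
  have "m = vadd p (vsmul p (zint (int p)) v) (vneg (vsmul p (zint (int j)) v))"
    using vsub_eq[OF _ M_mem[OF jm(2)] jm(3)[symmetric]] v by simp
  also have "\<dots> = vsmul p (zint (int p - int j)) v" by (rule vint_sub)
  finally have mm: "vsmul p (zint (int p - int j)) v \<in> M" using jm(2) by simp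
  show ?thesis
  proof (cases "j = 0")
    case True then show ?thesis using mm by simp
  next
    case False
    have "\<not> int p dvd (int p - int j)"
    proof
      assume "int p dvd (int p - int j)"
      then have "int p \<le> int p - int j" using jm(1) by (intro zdvd_imp_le) auto
      then show False using False by simp
    qed
    then have "v \<in> M" using unit_in_M[OF v _ mm] by blast
    then show ?thesis using \<open>v \<notin> M\<close> by simp
  qed
qed
abbreviation "Gen \<equiv> {br x y | x y. x \<in> L \<and> y \<in> L}"
abbreviation "GenM \<equiv> {br x y | x y. x \<in> M \<and> y \<in> M}"
abbreviation "S \<equiv> zspan p GenM"

lemma Gen_sub: "Gen \<subseteq> L" by auto
lemma GenM_sub: "GenM \<subseteq> L"
proof
  fix v assume "v \<in> GenM"
  then obtain x y where "v = br x y" "x \<in> M" "y \<in> M" by blast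
  then show "v \<in> L" using M_mem by simp
qed

lemma zp_mul_assoc: "zp_mul p (zp_mul p a b) d = zp_mul p a (zp_mul p b d)"
  by (rule ext) (simp add: zdefs mod_simps ac_simps)

lemma D_sub: "derived p 3 br \<subseteq> L"
  unfolding derived_def by (rule zspan_sub[OF Gen_sub])

lemma br_in_D: "x \<in> L \<Longrightarrow> y \<in> L \<Longrightarrow> br x y \<in> derived p 3 br"
  unfolding derived_def by (rule zspan_base[where d=3]) auto

lemma S_sub_M: "S \<subseteq> M"
  by (rule zspan_least) (use M_zero M_add M_smul M_br in auto)

lemma S_sub: "S \<subseteq> L" using S_sub_M M_sub by blast
lemma S_add: "u \<in> S \<Longrightarrow> v \<in> S \<Longrightarrow> vadd p u v \<in> S" by (rule zspan_add[OF GenM_sub])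
lemma S_smul: "c \<in> zp p \<Longrightarrow> u \<in> S \<Longrightarrow> vsmul p c u \<in> S" by (rule zspan_smul)
lemma S_zero: "vzero \<in> S" by (rule zspan_zero)
lemma br_in_S: "x \<in> M \<Longrightarrow> y \<in> M \<Longrightarrow> br x y \<in> S"
  by (rule zspan_base[where d=3]) (auto simp: M_mem)
lemma S_vneg: "u \<in> S \<Longrightarrow> vneg u \<in> S" unfolding vneg_def by (rule S_smul) simp

lemma phi_S: "u \<in> S \<Longrightarrow> \<phi> u \<in> derived p 3 br"
proof (induction rule: zspan.induct)
  case zspan_zero
  show ?case unfolding derived_def phi_zero by (rule zspan.zspan_zero)
next
  case (zspan_step v c u)
  obtain x y where xy: "v = br x y" "x \<in> M" "y \<in> M" using zspan_step(1) by blast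
  have vM: "v \<in> M" using xy M_br by simp
  have uM: "u \<in> M" using zspan_step(3) S_sub_M by blast
  have "\<phi> (vadd p (vsmul p c v) u) = vadd p (vsmul p c (\<phi> v)) (\<phi> u)"
    using phi_add[OF M_smul[OF zspan_step(2) vM] uM] phi_smul[OF zspan_step(2) vM] by simp
  moreover have "\<phi> v \<in> Gen" using xy phi_br[OF xy(2,3)] phi_mem[OF xy(2)] phi_mem[OF xy(3)] by blast
  ultimately show ?case unfolding derived_def
    using zspan.zspan_step[OF _ zspan_step(2) zspan_step.IH[unfolded derived_def]] by simp
qed

lemma smul_p2: "vsmul p (zint (int p ^ 2)) u = vsmul p (zint (int p)) (vsmul p (zint (int p)) u)"
  by (simp add: vsmul_vsmul zint_mul power2_eq_square)

lemma p2_S: "u \<in> derived p 3 br \<Longrightarrow> vsmul p (zint (int p ^ 2)) u \<in> S"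
  unfolding derived_def
proof (induction rule: zspan.induct)
  case zspan_zero
  show ?case by (simp add: S_zero)
next
  case (zspan_step v c u)
  obtain x y where xy: "v = br x y" "x \<in> L" "y \<in> L" using zspan_step(1) by blast
  let ?P = "zint (int p)"
  have e1: "vsmul p (zint (int p ^ 2)) v = br (vsmul p ?P x) (vsmul p ?P y)"
    using xy by (simp add: smul_p2 br_smul_l br_smul_r)
  have "vsmul p (zint (int p ^ 2)) (vadd p (vsmul p c v) u)
      = vadd p (vsmul p c (vsmul p (zint (int p ^ 2)) v)) (vsmul p (zint (int p ^ 2)) u)"
    by (simp add: vsmul_vadd vsmul_vsmul zp_mul_comm)
  also have "\<dots> = vadd p (vsmul p c (br (vsmul p ?P x) (vsmul p ?P y))) (vsmul p (zint (int p ^ 2)) u)"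
    using e1 by simp
  finally have e: "vsmul p (zint (int p ^ 2)) (vadd p (vsmul p c v) u)
      = vadd p (vsmul p c (br (vsmul p ?P x) (vsmul p ?P y))) (vsmul p (zint (int p ^ 2)) u)" .
  have g: "br (vsmul p ?P x) (vsmul p ?P y) \<in> GenM" using pL_sub_M xy by blast
  show ?case unfolding e by (rule zspan.zspan_step[OF g zspan_step(2) zspan_step.IH])
qed

lemma inv_lemma:
  assumes I: "lie_ideal p 3 br I" "I \<subseteq> M" "\<And>x. x \<in> I \<Longrightarrow> \<phi> x \<in> I"
  shows "phi_invariant p 3 br M \<phi> I"
proof -
  have "I \<subseteq> phi_dom p 3 M \<phi> n" for n
  proof (induction n)
    case 0 then show ?case using I(2) M_sub by simp
  next
    case (Suc n) then show ?case using I by auto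
  qed
  then show ?thesis unfolding phi_invariant_def using I by blast
qed

end

locale setting3 = setting +
  fixes w :: zpvec and k :: nat and c :: zpvec
  assumes D_eq: "derived p 3 br = zspan p {w}" and w_D: "w \<in> derived p 3 br"
    and w_nz: "w \<noteq> vzero" and prim: "primitive 3 c" and wc: "w = vsmul p (zint (int p ^ k)) c"
begin

lemma c_L: "c \<in> L" using prim unfolding primitive_def by simp
lemma w_L: "w \<in> L" using w_D D_sub by blast
lemma c_nz: "c \<noteq> vzero" using w_nz wc by auto

lemma D_Rc: "u \<in> derived p 3 br \<Longrightarrow> \<exists>r \<in> zp p. u = vsmul p r c"
proof -
  assume "u \<in> derived p 3 br"
  then obtain r where r: "r \<in> zp p" "u = vsmul p r w" using zspan_single[OF w_L] D_eq by auto
  then have "u = vsmul p (zp_mul p r (zint (int p ^ k))) c" using wc by (simp add: vsmul_vsmul)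
  then show ?thesis using r(1) by (intro bexI[of _ "zp_mul p r (zint (int p ^ k))"]) auto
qed

lemma sat: "v \<in> L \<Longrightarrow> vsmul p (zint (int p ^ j)) v \<in> derived p 3 br \<Longrightarrow> \<exists>s \<in> zp p. v = vsmul p s c"
  using D_Rc prim_sat[OF prim] by blast

lemma lam_ex: "x \<in> L \<Longrightarrow> \<exists>r \<in> zp p. br x c = vsmul p r c"
proof -
  assume x: "x \<in> L"
  have "vsmul p (zint (int p ^ k)) (br x c) = br x w" using wc x c_L by (simp add: br_smul_r)
  then have "vsmul p (zint (int p ^ k)) (br x c) \<in> derived p 3 br" using br_in_D x w_L by simp
  then show ?thesis using sat[of "br x c" k] x c_L by simp
qed

definition lam :: "zpvec \<Rightarrow> nat \<Rightarrow> int" where "lam x = (SOME r. r \<in> zp p \<and> br x c = vsmul p r c)"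

lemma lam: "x \<in> L \<Longrightarrow> lam x \<in> zp p \<and> br x c = vsmul p (lam x) c"
  unfolding lam_def using lam_ex by (metis (mono_tags, lifting) someI_ex)

lemma lam_uniq: "x \<in> L \<Longrightarrow> r \<in> zp p \<Longrightarrow> br x c = vsmul p r c \<Longrightarrow> lam x = r"
  using lam vsmul_cancel_vec[OF c_L c_nz] by metis

definition coef :: "zpvec \<Rightarrow> nat \<Rightarrow> int" where "coef v = (SOME r. r \<in> zp p \<and> v = vsmul p r c)"

lemma coef: "v \<in> derived p 3 br \<Longrightarrow> coef v \<in> zp p \<and> v = vsmul p (coef v) c"
  unfolding coef_def using D_Rc by (metis (mono_tags, lifting) someI_ex)

lemma stepA:
  assumes v: "v \<in> M" and r: "r \<in> zp p" and vr: "v = vsmul p r c"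
  shows "\<exists>s \<in> zp p. \<phi> v = vsmul p s c"
proof -
  have e: "vsmul p (zint (int p ^ (k + 2))) v = vsmul p r (vsmul p (zint (int p ^ 2)) w)"
    unfolding vr wc by (simp add: vsmul_vsmul zint_mul power_add zp_mul_comm power2_eq_square ac_simps)
  have "vsmul p (zint (int p ^ 2)) w \<in> S" by (rule p2_S[OF w_D])
  then have "vsmul p (zint (int p ^ (k + 2))) v \<in> S" unfolding e by (rule S_smul[OF r])
  then have "\<phi> (vsmul p (zint (int p ^ (k + 2))) v) \<in> derived p 3 br" by (rule phi_S)
  then have "vsmul p (zint (int p ^ (k + 2))) (\<phi> v) \<in> derived p 3 br" using phi_smul[OF zint_mem v] by simp
  then show ?thesis using sat phi_mem[OF v] by blast
qed

lemma smul3: "vsmul p r (vsmul p t (vsmul p l x)) = vsmul p (zp_mul p r l) (vsmul p t x)"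
proof -
  have "zp_mul p r (zp_mul p t l) = zp_mul p (zp_mul p r l) t"
    by (rule ext) (simp add: zdefs mod_simps ac_simps)
  then show ?thesis by (simp add: vsmul_vsmul)
qed

definition Rd :: "(nat \<Rightarrow> int) \<Rightarrow> zpvec set" where "Rd t = {vsmul p r (vsmul p t c) | r. r \<in> zp p}"

lemma Rd_ideal: assumes t: "t \<in> zp p" shows "lie_ideal p 3 br (Rd t)"
proof -
  let ?d = "vsmul p t c"
  have d: "?d \<in> L" using t c_L by simp
  have sub: "Rd t \<subseteq> L" unfolding Rd_def using d by auto
  have z: "vzero \<in> Rd t" unfolding Rd_def by (intro CollectI exI[of _ zp_zero]) simp
  have a: "vadd p u v \<in> Rd t" if "u \<in> Rd t" "v \<in> Rd t" for u v
  proof -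
    from that(1) obtain r where r: "r \<in> zp p" "u = vsmul p r ?d" unfolding Rd_def by blast
    from that(2) obtain s where s: "s \<in> zp p" "v = vsmul p s ?d" unfolding Rd_def by blast
    note rs = r(1) s(1) r(2) s(2)
    have "vadd p u v = vsmul p (zp_add p r s) ?d" unfolding rs by (simp add: vadd_vsmul)
    then show ?thesis unfolding Rd_def using rs by auto
  qed
  have m: "vsmul p a u \<in> Rd t" if "a \<in> zp p" "u \<in> Rd t" for a u
  proof -
    from that(2) obtain r where r: "r \<in> zp p" "u = vsmul p r ?d" unfolding Rd_def by blast
    have "vsmul p a u = vsmul p (zp_mul p a r) ?d" unfolding r by (simp add: vsmul_vsmul zp_mul_assoc)
    then show ?thesis unfolding Rd_def using r that by auto
  qed
  have i: "br x y \<in> Rd t" if "x \<in> L" "y \<in> Rd t" for x y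
  proof -
    from that(2) obtain r where r: "r \<in> zp p" "y = vsmul p r ?d" unfolding Rd_def by blast
    have "br x y = vsmul p r (vsmul p t (br x c))" unfolding r using that r t c_L by (simp add: br_smul_r)
    also have "\<dots> = vsmul p (zp_mul p r (lam x)) ?d" using lam[OF that(1)] by (simp add: smul3)
    finally show ?thesis unfolding Rd_def using r lam[OF that(1)] by auto
  qed
  show ?thesis unfolding lie_ideal_def submod_def using sub z a m i by blast
qed

definition zsub :: "(nat \<Rightarrow> int) \<Rightarrow> (nat \<Rightarrow> int) \<Rightarrow> nat \<Rightarrow> int" where "zsub x y = zp_add p x (zneg y)"
definition S3 :: "(nat \<Rightarrow> int) \<Rightarrow> (nat \<Rightarrow> int) \<Rightarrow> (nat \<Rightarrow> int) \<Rightarrow> (nat \<Rightarrow> int) \<Rightarrow> (nat \<Rightarrow> int) \<Rightarrow> (nat \<Rightarrow> int) \<Rightarrow> nat \<Rightarrow> int"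
  where "S3 x y z a b d = zp_add p (zp_mul p x a) (zp_add p (zp_mul p y b) (zp_mul p z d))"

lemma zsub_mem[simp]: "x \<in> zp p \<Longrightarrow> y \<in> zp p \<Longrightarrow> zsub x y \<in> zp p" unfolding zsub_def by simp
lemma zneg_zero: "zneg zp_zero = zp_zero" by (rule ext) (simp add: zdefs)

lemma cross_l: "S3 (zsub (zp_mul p l1 b2) (zp_mul p l2 b1)) (zsub (zp_mul p l2 b0) (zp_mul p l0 b2))
   (zsub (zp_mul p l0 b1) (zp_mul p l1 b0)) l0 l1 l2 = zp_zero"
  by (rule ext) (simp add: S3_def zsub_def zdefs mod_simps, (simp add: algebra_simps)?)
lemma cross_b: "S3 (zsub (zp_mul p l1 b2) (zp_mul p l2 b1)) (zsub (zp_mul p l2 b0) (zp_mul p l0 b2))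
   (zsub (zp_mul p l0 b1) (zp_mul p l1 b0)) b0 b1 b2 = zp_zero"
  by (rule ext) (simp add: S3_def zsub_def zdefs mod_simps, (simp add: algebra_simps)?)
lemma id_a: "S3 l1 (zneg l0) zp_zero l0 l1 l2 = zp_zero"
  by (rule ext) (simp add: S3_def zdefs mod_simps, (simp add: algebra_simps)?)
lemma id_b: "S3 l1 (zneg l0) zp_zero b0 b1 b2 = zneg (zsub (zp_mul p l0 b1) (zp_mul p l1 b0))"
  by (rule ext) (simp add: S3_def zsub_def zdefs mod_simps, (simp add: algebra_simps)?)
lemma id_c: "S3 l2 zp_zero (zneg l0) l0 l1 l2 = zp_zero"
  by (rule ext) (simp add: S3_def zdefs mod_simps, (simp add: algebra_simps)?)
lemma id_d: "S3 l2 zp_zero (zneg l0) b0 b1 b2 = zsub (zp_mul p l2 b0) (zp_mul p l0 b2)"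
  by (rule ext) (simp add: S3_def zsub_def zdefs mod_simps, (simp add: algebra_simps)?)

lemma alg:
  assumes l: "l0 \<in> zp p" "l1 \<in> zp p" "l2 \<in> zp p" and b: "b0 \<in> zp p" "b1 \<in> zp p" "b2 \<in> zp p"
    and nz: "\<not> (l0 = zp_zero \<and> l1 = zp_zero \<and> l2 = zp_zero)"
  shows "\<exists>x y z. x \<in> zp p \<and> y \<in> zp p \<and> z \<in> zp p \<and> \<not> (x = zp_zero \<and> y = zp_zero \<and> z = zp_zero)
     \<and> S3 x y z l0 l1 l2 = zp_zero \<and> S3 x y z b0 b1 b2 = zp_zero"
proof -
  let ?X0 = "zsub (zp_mul p l1 b2) (zp_mul p l2 b1)"
  let ?X1 = "zsub (zp_mul p l2 b0) (zp_mul p l0 b2)"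
  let ?X2 = "zsub (zp_mul p l0 b1) (zp_mul p l1 b0)"
  show ?thesis
  proof (cases "?X0 = zp_zero \<and> ?X1 = zp_zero \<and> ?X2 = zp_zero")
    case False
    then show ?thesis using cross_l cross_b l b by (intro exI[of _ ?X0] exI[of _ ?X1] exI[of _ ?X2]) simp
  next
    case True
    show ?thesis
    proof (cases "l0 = zp_zero \<and> l1 = zp_zero")
      case False
      have "\<not> (l1 = zp_zero \<and> zneg l0 = zp_zero \<and> zp_zero = zp_zero)"
        using False zneg_nz[OF l(1)] by blast
      moreover have "S3 l1 (zneg l0) zp_zero b0 b1 b2 = zp_zero" using id_b True zneg_zero by simp
      ultimately show ?thesis using id_a l by (intro exI[of _ l1] exI[of _ "zneg l0"] exI[of _ zp_zero]) simp
    next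
      case l01: True
      then have "l2 \<noteq> zp_zero" using nz by blast
      moreover have "S3 l2 zp_zero (zneg l0) b0 b1 b2 = zp_zero" using id_d True by simp
      ultimately show ?thesis using id_c l by (intro exI[of _ l2] exI[of _ zp_zero] exI[of _ "zneg l0"]) simp
    qed
  qed
qed

definition ev :: "nat \<Rightarrow> zpvec" where "ev j = (\<lambda>i. if i = j then zint 1 else zp_zero)"
definition mk3 :: "(nat \<Rightarrow> int) \<Rightarrow> (nat \<Rightarrow> int) \<Rightarrow> (nat \<Rightarrow> int) \<Rightarrow> zpvec" where
  "mk3 a b d = (\<lambda>i. if i = 0 then a else if i = 1 then b else if i = 2 then d else zp_zero)"

lemma ev_mem: "j < 3 \<Longrightarrow> ev j \<in> L" unfolding zpvec_def ev_def by auto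
lemma mk3_mem: "a \<in> zp p \<Longrightarrow> b \<in> zp p \<Longrightarrow> d \<in> zp p \<Longrightarrow> mk3 a b d \<in> L"
  unfolding zpvec_def mk3_def by auto

lemma mk3_dec: "a \<in> zp p \<Longrightarrow> b \<in> zp p \<Longrightarrow> d \<in> zp p \<Longrightarrow>
   mk3 a b d = vadd p (vsmul p a (ev 0)) (vadd p (vsmul p b (ev 1)) (vsmul p d (ev 2)))"
  apply (intro ext)
  subgoal for i n
    by (cases "i = 0"; cases "i = 1"; cases "i = 2") (simp_all add: mk3_def ev_def vdefs zdefs mod_simps)
  done

lemma vec_mk3: "u \<in> L \<Longrightarrow> u = mk3 (u 0) (u 1) (u 2)"
proof -
  assume u: "u \<in> L"
  show ?thesis
  proof (rule vec_eqI[OF u mk3_mem])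
    fix i :: nat assume "i < 3"
    then have "i = 0 \<or> i = 1 \<or> i = 2" by arith
    then show "u i = mk3 (u 0) (u 1) (u 2) i" unfolding mk3_def by auto
  qed (use u zpvec_coord in auto)
qed

lemma comb3: "vadd p (vsmul p a (vsmul p x v)) (vadd p (vsmul p b (vsmul p y v)) (vsmul p d (vsmul p z v)))
   = vsmul p (S3 a b d x y z) v"
  by (intro ext) (simp add: vdefs zdefs S3_def mod_simps, (simp add: algebra_simps)?)

lemma lin_l:
  assumes abd: "a \<in> zp p" "b \<in> zp p" "d \<in> zp p"
  shows "br (mk3 a b d) c = vsmul p (S3 a b d (lam (ev 0)) (lam (ev 1)) (lam (ev 2))) c"
proof -
  have e: "ev 0 \<in> L" "ev 1 \<in> L" "ev 2 \<in> L" using ev_mem by auto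
  have "br (mk3 a b d) c = vadd p (vsmul p a (br (ev 0) c)) (vadd p (vsmul p b (br (ev 1) c)) (vsmul p d (br (ev 2) c)))"
    unfolding mk3_dec[OF abd] using e abd c_L by (simp add: br_add_l br_smul_l)
  also have "\<dots> = vsmul p (S3 a b d (lam (ev 0)) (lam (ev 1)) (lam (ev 2))) c"
    using lam[OF e(1)] lam[OF e(2)] lam[OF e(3)] comb3 by simp
  finally show ?thesis .
qed

lemma lin_r:
  assumes abd: "a \<in> zp p" "b \<in> zp p" "d \<in> zp p" and x1: "x1 \<in> L"
  shows "br x1 (mk3 a b d) = vsmul p (S3 a b d (coef (br x1 (ev 0))) (coef (br x1 (ev 1))) (coef (br x1 (ev 2)))) c"
proof -
  have e: "ev 0 \<in> L" "ev 1 \<in> L" "ev 2 \<in> L" using ev_mem by auto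
  have d: "br x1 (ev 0) \<in> derived p 3 br" "br x1 (ev 1) \<in> derived p 3 br" "br x1 (ev 2) \<in> derived p 3 br"
    using br_in_D x1 e by auto
  have "br x1 (mk3 a b d) = vadd p (vsmul p a (br x1 (ev 0))) (vadd p (vsmul p b (br x1 (ev 1))) (vsmul p d (br x1 (ev 2))))"
    unfolding mk3_dec[OF abd] using e abd x1 by (simp add: br_add_r br_smul_r)
  also have "\<dots> = vsmul p (S3 a b d (coef (br x1 (ev 0))) (coef (br x1 (ev 1))) (coef (br x1 (ev 2)))) c"
    using coef[OF d(1)] coef[OF d(2)] coef[OF d(3)] comb3 by metis
  finally show ?thesis .
qed

lemma cross_exists:
  assumes x1: "x1 \<in> L" and lx: "lam x1 \<noteq> zp_zero"
  shows "\<exists>u \<in> L. u \<noteq> vzero \<and> lam u = zp_zero \<and> br x1 u = vzero"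
proof -
  have e: "ev 0 \<in> L" "ev 1 \<in> L" "ev 2 \<in> L" using ev_mem by auto
  have d: "br x1 (ev 0) \<in> derived p 3 br" "br x1 (ev 1) \<in> derived p 3 br" "br x1 (ev 2) \<in> derived p 3 br"
    using br_in_D x1 e by auto
  let ?l0 = "lam (ev 0)" and ?l1 = "lam (ev 1)" and ?l2 = "lam (ev 2)"
  let ?b0 = "coef (br x1 (ev 0))" and ?b1 = "coef (br x1 (ev 1))" and ?b2 = "coef (br x1 (ev 2))"
  have l: "?l0 \<in> zp p" "?l1 \<in> zp p" "?l2 \<in> zp p" using lam e by auto
  have b: "?b0 \<in> zp p" "?b1 \<in> zp p" "?b2 \<in> zp p" using coef d by auto
  have x1c: "x1 0 \<in> zp p" "x1 1 \<in> zp p" "x1 2 \<in> zp p" using zpvec_coord[OF x1] by auto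
  have nz: "\<not> (?l0 = zp_zero \<and> ?l1 = zp_zero \<and> ?l2 = zp_zero)"
  proof
    assume z: "?l0 = zp_zero \<and> ?l1 = zp_zero \<and> ?l2 = zp_zero"
    have "br x1 c = br (mk3 (x1 0) (x1 1) (x1 2)) c" using vec_mk3[OF x1] by simp
    also have "\<dots> = vsmul p (S3 (x1 0) (x1 1) (x1 2) ?l0 ?l1 ?l2) c" by (rule lin_l[OF x1c])
    also have "S3 (x1 0) (x1 1) (x1 2) ?l0 ?l1 ?l2 = zp_zero" using z by (simp add: S3_def)
    finally have "br x1 c = vsmul p zp_zero c" .
    then have "lam x1 = zp_zero" using lam_uniq[OF x1 zp_zero_mem] by simp
    then show False using lx by simp
  qed
  obtain x y z where xyz: "x \<in> zp p" "y \<in> zp p" "z \<in> zp p" "\<not> (x = zp_zero \<and> y = zp_zero \<and> z = zp_zero)"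
    "S3 x y z ?l0 ?l1 ?l2 = zp_zero" "S3 x y z ?b0 ?b1 ?b2 = zp_zero"
    using alg[OF l b nz] by blast
  let ?u = "mk3 x y z"
  have um: "?u \<in> L" using mk3_mem xyz by simp
  have unz: "?u \<noteq> vzero"
  proof
    assume "?u = vzero"
    then have "?u 0 = zp_zero" "?u 1 = zp_zero" "?u 2 = zp_zero" by (auto simp: vzero_def)
    then show False using xyz(4) by (simp add: mk3_def)
  qed
  have "br ?u c = vsmul p zp_zero c" using lin_l[OF xyz(1-3)] xyz(5) by simp
  then have lu: "lam ?u = zp_zero" using lam_uniq[OF um zp_zero_mem] by simp
  have "br x1 ?u = vzero" using lin_r[OF xyz(1-3) x1] xyz(6) by simp
  then show ?thesis using um unz lu by blast
qed

lemma caseB: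
  assumes cM: "c \<in> M"
  shows "\<exists>I. phi_invariant p 3 br M \<phi> I \<and> I \<noteq> {vzero}"
proof -
  let ?I = "Rd (zint 1)"
  have Ie: "?I = {vsmul p r c | r. r \<in> zp p}" unfolding Rd_def using c_L by simp
  obtain s where s: "s \<in> zp p" "\<phi> c = vsmul p s c" using stepA[OF cM zint_mem, of 1] c_L by auto
  have sub: "?I \<subseteq> M" unfolding Ie using M_smul cM by auto
  have cl: "\<phi> x \<in> ?I" if "x \<in> ?I" for x
  proof -
    from that obtain r where r: "r \<in> zp p" "x = vsmul p r c" unfolding Ie by blast
    have "\<phi> x = vsmul p (zp_mul p r s) c" unfolding r using phi_smul[OF r(1) cM] s by (simp add: vsmul_vsmul)
    then show ?thesis unfolding Ie using r s by auto
  qed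
  have "c \<in> ?I" unfolding Ie using c_L by (intro CollectI exI[of _ "zint 1"]) simp
  then have "?I \<noteq> {vzero}" using c_nz by blast
  then show ?thesis using inv_lemma[OF Rd_ideal[OF zint_mem] sub cl] by blast
qed

lemma caseC:
  assumes cM: "c \<notin> M" and mu: "mu \<in> zp p" "\<phi> (vsmul p (zint (int p)) c) = vsmul p mu c" and mu1: "mu 1 = 0"
  shows "\<exists>I. phi_invariant p 3 br M \<phi> I \<and> I \<noteq> {vzero}"
proof -
  let ?pc = "vsmul p (zint (int p)) c"
  let ?I = "Rd (zint (int p))"
  have pcM: "?pc \<in> M" using pL_sub_M c_L by simp
  obtain s where s: "s \<in> zp p" "mu = zp_mul p (zint (int p)) s" using zp_div_p[OF mu(1) mu1] by blast
  have sub: "?I \<subseteq> M" unfolding Rd_def using M_smul pcM by auto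
  have cl: "\<phi> x \<in> ?I" if "x \<in> ?I" for x
  proof -
    from that obtain r where r: "r \<in> zp p" "x = vsmul p r ?pc" unfolding Rd_def by blast
    have "\<phi> x = vsmul p r (vsmul p mu c)" unfolding r using phi_smul[OF r(1) pcM] mu by simp
    also have "\<dots> = vsmul p (zp_mul p r s) ?pc" unfolding s(2) by (simp add: vsmul_vsmul zp_mul_comm zp_mul_assoc)
    finally show ?thesis unfolding Rd_def using r s by auto
  qed
  have "?pc \<in> ?I" unfolding Rd_def using c_L by (intro CollectI exI[of _ "zint 1"]) simp
  moreover have "?pc \<noteq> vzero" using vsmul_eq_zero[OF zint_mem c_L] zint_p_nz c_nz by blast
  ultimately have "?I \<noteq> {vzero}" by blast
  then show ?thesis using inv_lemma[OF Rd_ideal[OF zint_mem] sub cl] by blast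
qed

end

context setting3
begin

lemma vneg_vzero[simp]: "vneg vzero = vzero" unfolding vneg_def by simp

lemma central:
  assumes u: "u \<in> L" and x1: "x1 \<in> L" and lu: "lam u = zp_zero" and lx: "lam x1 \<noteq> zp_zero"
    and ux: "br x1 u = vzero" and v: "v \<in> L"
  shows "br v u = vzero"
proof -
  have J: "vadd p (vadd p (br x1 (br u v)) (br u (br v x1))) (br v (br x1 u)) = vzero"
    by (rule jacobi[OF x1 u v])
  have t3: "br v (br x1 u) = vzero" using ux v by simp
  obtain s where s: "s \<in> zp p" "br v x1 = vsmul p s c" using D_Rc[OF br_in_D[OF v x1]] by blast
  have "br u (br v x1) = vsmul p s (br u c)" using s u c_L by (simp add: br_smul_r)
  also have "\<dots> = vzero" using lam[OF u] lu by simp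
  finally have t2: "br u (br v x1) = vzero" .
  have t1: "br x1 (br u v) = vzero" using J t2 t3 x1 u v by simp
  obtain r where r: "r \<in> zp p" "br u v = vsmul p r c" using D_Rc[OF br_in_D[OF u v]] by blast
  have "br x1 (br u v) = vsmul p r (br x1 c)" using r x1 c_L by (simp add: br_smul_r)
  also have "\<dots> = vsmul p (zp_mul p r (lam x1)) c" using lam[OF x1] by (simp add: vsmul_vsmul)
  finally have "vsmul p (zp_mul p r (lam x1)) c = vzero" using t1 by simp
  then have "zp_mul p r (lam x1) = zp_zero" using vsmul_eq_zero[OF _ c_L] r lam[OF x1] c_nz by auto
  then have "r = zp_zero" using zp_domain[OF r(1)] lam[OF x1] lx by auto
  then have "br u v = vzero" using r by simp
  then show ?thesis using br_anti[OF u v] by simp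
qed

definition Zc :: "zpvec set" where "Zc = {z \<in> L. \<forall>v \<in> L. br v z = vzero}"

lemma Z_ideal: "lie_ideal p 3 br Zc"
proof -
  have sub: "Zc \<subseteq> L" unfolding Zc_def by auto
  have z: "vzero \<in> Zc" unfolding Zc_def by simp
  have a: "vadd p x y \<in> Zc" if "x \<in> Zc" "y \<in> Zc" for x y
    using that unfolding Zc_def by (auto simp: br_add_r)
  have m: "vsmul p a x \<in> Zc" if "a \<in> zp p" "x \<in> Zc" for a x
    using that unfolding Zc_def by (auto simp: br_smul_r)
  have i: "br x y \<in> Zc" if "x \<in> L" "y \<in> Zc" for x y
    using that z unfolding Zc_def by auto
  show ?thesis unfolding lie_ideal_def submod_def using sub z a m i by blast
qed

end

locale caseD = setting3 +
  fixes mu :: "nat \<Rightarrow> int"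
  assumes cM: "c \<notin> M" and mu: "mu \<in> zp p" and phipc: "\<phi> (vsmul p (zint (int p)) c) = vsmul p mu c"
    and mu1: "mu 1 \<noteq> 0"
begin

abbreviation "pc \<equiv> vsmul p (zint (int p)) c"
lemma pc_M: "pc \<in> M" using pL_sub_M c_L by simp
lemma pc_L: "pc \<in> L" using c_L by simp
lemma mu_nz: "mu \<noteq> zp_zero" using mu1 by (auto simp: zp_zero_def)

lemma Da: "\<exists>m0 \<in> M. vsmul p (lam m0) c \<notin> S"
proof (rule ccontr)
  assume "\<not> ?thesis"
  then have H: "vsmul p (lam m) c \<in> S" if "m \<in> M" for m using that by blast
  have brS: "br x y \<in> S" if x: "x \<in> L" and y: "y \<in> L" for x y
  proof -
    obtain i m1 where im: "i < p" "m1 \<in> M" "x = vadd p (vsmul p (zint (int i)) c) m1"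
      using all_cosets[OF c_L cM x] by blast
    obtain j m2 where jm: "j < p" "m2 \<in> M" "y = vadd p (vsmul p (zint (int j)) c) m2"
      using all_cosets[OF c_L cM y] by blast
    have m1L: "m1 \<in> L" and m2L: "m2 \<in> L" using im jm M_mem by auto
    have "br c m2 = vneg (br m2 c)" by (rule br_anti[OF m2L c_L])
    also have "\<dots> = vneg (vsmul p (lam m2) c)" using lam[OF m2L] by simp
    finally have cm2: "br c m2 \<in> S" using S_vneg[OF H[OF jm(2)]] by simp
    have "br c y = vadd p (br c (vsmul p (zint (int j)) c)) (br c m2)"
      unfolding jm(3) using c_L m2L by (simp add: br_add_r)
    also have "br c (vsmul p (zint (int j)) c) = vzero" using c_L by (simp add: br_smul_r br_self)
    finally have cy: "br c y = br c m2" using c_L m2L by simp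
    have icy: "br (vsmul p (zint (int i)) c) y \<in> S"
      using c_L y cm2 cy by (simp add: br_smul_l S_smul)
    have "br m1 y = vadd p (br m1 (vsmul p (zint (int j)) c)) (br m1 m2)"
      unfolding jm(3) using c_L m1L m2L by (simp add: br_add_r)
    also have "\<dots> = vadd p (vsmul p (zint (int j)) (vsmul p (lam m1) c)) (br m1 m2)"
      using c_L m1L lam[OF m1L] by (simp add: br_smul_r)
    finally have m1y: "br m1 y \<in> S"
      using S_add[OF S_smul[OF zint_mem H[OF im(2)]] br_in_S[OF im(2) jm(2)]] by simp
    have "br x y = vadd p (br (vsmul p (zint (int i)) c) y) (br m1 y)"
      unfolding im(3) using c_L m1L y by (simp add: br_add_l)
    then show ?thesis using S_add[OF icy m1y] by simp
  qed
  have DS: "derived p 3 br \<subseteq> S"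
    unfolding derived_def by (rule zspan_least) (use S_zero S_add S_smul brS in auto)
  have wM: "w \<in> M" using w_D DS S_sub_M by blast
  have k0: "k \<noteq> 0"
  proof
    assume "k = 0"
    then have "w = c" using wc c_L by simp
    then show False using wM cM by simp
  qed
  then obtain k' where k': "k = Suc k'" by (cases k) auto
  have w2: "w = vsmul p (zint (int p ^ k')) pc"
    unfolding wc k' by (simp add: vsmul_vsmul zint_mul ac_simps)
  have "\<phi> w = vsmul p (zint (int p ^ k')) (vsmul p mu c)"
    unfolding w2 using phi_smul[OF zint_mem pc_M] phipc by simp
  also have "\<dots> = vsmul p (zp_mul p (zint (int p ^ k')) mu) c" by (simp add: vsmul_vsmul)
  finally have pw: "\<phi> w = vsmul p (zp_mul p (zint (int p ^ k')) mu) c" .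
  have "\<phi> w \<in> derived p 3 br" using phi_S DS w_D by blast
  then obtain r where r: "r \<in> zp p" "\<phi> w = vsmul p r w" using zspan_single[OF w_L] D_eq by auto
  have "vsmul p r w = vsmul p (zp_mul p r (zint (int p ^ k))) c" unfolding wc by (simp add: vsmul_vsmul)
  then have "vsmul p (zp_mul p (zint (int p ^ k')) mu) c = vsmul p (zp_mul p r (zint (int p ^ k))) c"
    using pw r by simp
  then have e: "zp_mul p (zint (int p ^ k')) mu = zp_mul p r (zint (int p ^ k))"
    using vsmul_cancel_vec[OF c_L c_nz] mu r by simp
  have "zp_mul p r (zint (int p ^ k)) = zp_mul p (zint (int p ^ k')) (zp_mul p (zint (int p)) r)"
    unfolding k' by (rule ext) (simp add: zdefs mod_simps, (simp add: ac_simps)?)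
  then have "mu = zp_mul p (zint (int p)) r"
    using zp_mul_cancel[OF zint_mem zint_pow_nz mu] e r by simp
  then have "mu 1 = zp_mul p (zint (int p)) r 1" by simp
  also have "\<dots> = 0" by (simp add: zdefs)
  finally show False using mu1 by simp
qed

definition m0 :: zpvec where "m0 = (SOME m. m \<in> M \<and> vsmul p (lam m) c \<notin> S)"

lemma m0: "m0 \<in> M" "vsmul p (lam m0) c \<notin> S"
proof -
  have "\<exists>m. m \<in> M \<and> vsmul p (lam m) c \<notin> S" using Da by blast
  then have "m0 \<in> M \<and> vsmul p (lam m0) c \<notin> S" unfolding m0_def by (rule someI_ex)
  then show "m0 \<in> M" "vsmul p (lam m0) c \<notin> S" by auto
qed

lemma m0L: "m0 \<in> L" using m0 M_mem by simp

lemma a_nz: "lam m0 \<noteq> zp_zero"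
proof
  assume "lam m0 = zp_zero"
  then have "vsmul p (lam m0) c = vzero" by simp
  then show False using m0(2) S_zero by simp
qed

lemma lam_phi_m0: "lam (\<phi> m0) = lam m0"
proof -
  let ?a = "lam m0"
  have a: "?a \<in> zp p" "br m0 c = vsmul p ?a c" using lam[OF m0L] by auto
  have pm: "\<phi> m0 \<in> L" using phi_mem[OF m0(1)] .
  have e1: "br m0 pc = vsmul p ?a pc"
    using m0L c_L a by (simp add: br_smul_r vsmul_vsmul zp_mul_comm)
  have "\<phi> (br m0 pc) = vsmul p (zp_mul p mu (lam (\<phi> m0))) c"
    using phi_br[OF m0(1) pc_M] phipc pm c_L mu lam[OF pm] by (simp add: br_smul_r vsmul_vsmul)
  moreover have "\<phi> (br m0 pc) = vsmul p (zp_mul p ?a mu) c"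
    unfolding e1 using phi_smul[OF a(1) pc_M] phipc by (simp add: vsmul_vsmul)
  ultimately have "zp_mul p mu (lam (\<phi> m0)) = zp_mul p ?a mu"
    using vsmul_cancel_vec[OF c_L c_nz] mu a lam[OF pm] by simp
  then have "zp_mul p mu (lam (\<phi> m0)) = zp_mul p mu ?a" by (simp add: zp_mul_comm)
  then show ?thesis using zp_mul_cancel[OF mu mu_nz] lam[OF pm] a by simp
qed

lemma Z_sub_M: assumes z: "z \<in> Zc" shows "z \<in> M"
proof -
  have zL: "z \<in> L" using z unfolding Zc_def by simp
  obtain j m where jm: "j < p" "m \<in> M" "z = vadd p (vsmul p (zint (int j)) c) m"
    using all_cosets[OF c_L cM zL] by blast
  have mL: "m \<in> L" using jm M_mem by simp
  show ?thesis
  proof (cases "j = 0")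
    case True then show ?thesis using jm mL by simp
  next
    case False
    let ?a = "lam m0"
    let ?X = "vsmul p (zint (int j)) (vsmul p ?a c)"
    have a: "?a \<in> zp p" "br m0 c = vsmul p ?a c" using lam[OF m0L] by auto
    have XL: "?X \<in> L" using a c_L by simp
    have "vzero = br m0 z" using z m0L unfolding Zc_def by simp
    also have "\<dots> = vadd p (br m0 (vsmul p (zint (int j)) c)) (br m0 m)"
      unfolding jm(3) using m0L c_L mL by (simp add: br_add_r)
    also have "\<dots> = vadd p ?X (br m0 m)" using m0L c_L a by (simp add: br_smul_r)
    also have "\<dots> = vadd p (br m0 m) ?X" by (rule vadd_comm)
    finally have "vadd p (br m0 m) ?X = vzero" by simp
    then have "?X = vneg (br m0 m)" using vsub_zero[of "br m0 m" 3 ?X] m0L mL XL by simp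
    then have XS: "?X \<in> S" using S_vneg[OF br_in_S[OF m0(1) jm(2)]] by simp
    have "\<not> int p dvd int j"
    proof
      assume "int p dvd int j"
      then have "int p \<le> int j" using False by (intro zdvd_imp_le) auto
      then show False using jm(1) by simp
    qed
    then obtain s where s: "s \<in> zp p" "zp_mul p (zint (int j)) s = zint 1" using zint_unit by blast
    have "vsmul p s ?X = vsmul p (zp_mul p s (zint (int j))) (vsmul p ?a c)" by (simp add: vsmul_vsmul zp_mul_assoc)
    also have "\<dots> = vsmul p ?a c" using s a c_L by (simp add: zp_mul_comm)
    finally have "vsmul p ?a c \<in> S" using S_smul[OF s(1) XS] by simp
    then show ?thesis using m0(2) by simp
  qed
qed

lemma phi_Z: assumes z: "z \<in> Zc" shows "\<phi> z \<in> Zc"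
proof -
  have zL: "z \<in> L" using z unfolding Zc_def by simp
  have zM: "z \<in> M" by (rule Z_sub_M[OF z])
  have pz: "\<phi> z \<in> L" by (rule phi_mem[OF zM])
  have pm: "\<phi> m0 \<in> L" by (rule phi_mem[OF m0(1)])
  have "br pc z = vzero" using z pc_L unfolding Zc_def by simp
  then have zpc: "br z pc = vzero" using br_anti[OF pc_L zL] by simp
  have "vzero = \<phi> (br z pc)" using zpc phi_zero by simp
  also have "\<dots> = vsmul p (zp_mul p mu (lam (\<phi> z))) c"
    using phi_br[OF zM pc_M] phipc pz c_L mu lam[OF pz] by (simp add: br_smul_r vsmul_vsmul)
  finally have "vsmul p (zp_mul p mu (lam (\<phi> z))) c = vzero" by simp
  then have "zp_mul p mu (lam (\<phi> z)) = zp_zero" using vsmul_eq_zero[OF _ c_L] mu lam[OF pz] c_nz by auto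
  then have lz: "lam (\<phi> z) = zp_zero" using zp_domain[OF mu] lam[OF pz] mu_nz by auto
  have "br (\<phi> m0) (\<phi> z) = \<phi> (br m0 z)" using phi_br[OF m0(1) zM] by simp
  also have "br m0 z = vzero" using z m0L unfolding Zc_def by simp
  finally have mz: "br (\<phi> m0) (\<phi> z) = vzero" using phi_zero by simp
  have "lam (\<phi> m0) \<noteq> zp_zero" using lam_phi_m0 a_nz by simp
  then have "\<forall>v \<in> L. br v (\<phi> z) = vzero" using central[OF pz pm lz _ mz] by blast
  then show ?thesis unfolding Zc_def using pz by simp
qed

lemma main_D: "\<exists>I. phi_invariant p 3 br M \<phi> I \<and> I \<noteq> {vzero}"
proof -
  obtain u where u: "u \<in> L" "u \<noteq> vzero" "lam u = zp_zero" "br m0 u = vzero"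
    using cross_exists[OF m0L a_nz] by blast
  have "\<forall>v \<in> L. br v u = vzero" using central[OF u(1) m0L u(3) a_nz u(4)] by blast
  then have "u \<in> Zc" unfolding Zc_def using u(1) by simp
  then have "Zc \<noteq> {vzero}" using u(2) by blast
  moreover have "phi_invariant p 3 br M \<phi> Zc"
    using inv_lemma[OF Z_ideal] Z_sub_M phi_Z by blast
  ultimately show ?thesis by blast
qed

end

theorem proposition1p13:
  fixes p :: nat and br :: "zpvec \<Rightarrow> zpvec \<Rightarrow> zpvec"
  assumes "prime p"
    and "lie_lattice p 3 br"
    and "free_of_rank p (derived p 3 br) 1"
  shows "\<not> self_similar_of_index p 3 br p"
proof
  assume "self_similar_of_index p 3 br p"
  then obtain M \<phi> where ve: "virtual_endo p 3 br M \<phi>" and cd: "card (cosets p 3 M) = p"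
    and sim: "simple_ve p 3 br M \<phi>"
    unfolding self_similar_of_index_def by blast
  interpret st: setting p br M \<phi>
    by (intro setting.intro zpl.intro setting_axioms.intro) (use assms ve cd in auto)
  from assms(3) obtain ws where ws: "length ws = 1" "set ws \<subseteq> derived p 3 br"
    "zspan p (set ws) = derived p 3 br" "lin_indep p ws"
    unfolding free_of_rank_def by blast
  from ws(1) obtain w where w: "ws = [w]" by (metis One_nat_def length_0_conv length_Suc_conv)
  have wD: "w \<in> derived p 3 br" using ws(2) w by simp
  have wL: "w \<in> zpvec p 3" using wD st.D_sub by blast
  have Deq: "derived p 3 br = zspan p {w}" using ws(3) w by simp
  have wnz: "w \<noteq> vzero"
  proof
    assume w0: "w = vzero"
    have "lincomb p [st.zint 1] [w] = vzero"
      unfolding lincomb_def w0 by simp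
    moreover have "set [st.zint 1] \<subseteq> zp p" by simp
    ultimately have li: "length [st.zint 1] = length [w] \<and> set [st.zint 1] \<subseteq> zp p \<and> lincomb p [st.zint 1] [w] = vzero"
      by simp
    have "lin_indep p [w]" using ws(4) w by simp
    then have "\<forall>c\<in>set [st.zint 1]. c = zp_zero" using li unfolding lin_indep_def by blast
    then have "st.zint 1 = zp_zero" by simp
    then show False using st.zint_1_nz by simp
  qed
  obtain k c where kc: "st.primitive 3 c" "w = vsmul p (st.zint (int p ^ k)) c"
    using st.prim_decomp[OF wL wnz] by blast
  interpret s3: setting3 p br M \<phi> w k c
    by (intro setting3.intro st.setting_axioms setting3_axioms.intro st.zpl_axioms) (use Deq wD wnz kc in auto)
  have "\<exists>I. phi_invariant p 3 br M \<phi> I \<and> I \<noteq> {vzero}"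
  proof (cases "c \<in> M")
    case True
    then show ?thesis by (rule s3.caseB)
  next
    case False
    have pcM: "vsmul p (st.zint (int p)) c \<in> M" using st.pL_sub_M s3.c_L by simp
    obtain mu where mu: "mu \<in> zp p" "\<phi> (vsmul p (st.zint (int p)) c) = vsmul p mu c"
      using s3.stepA[OF pcM st.zint_mem] by blast
    show ?thesis
    proof (cases "mu 1 = 0")
      case True
      then show ?thesis using s3.caseC[OF False mu] by blast
    next
      case mu1: False
      interpret cD: caseD p br M \<phi> w k c mu
        by (intro caseD.intro s3.setting3_axioms caseD_axioms.intro) (use False mu mu1 in auto)
      show ?thesis by (rule cD.main_D)
    qed
  qed
  then show False using sim unfolding simple_ve_def by blast
qed

end
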